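(* Suppose Assumption (A) holds and, for sufficiently large $m$ (conditionally on the fitted functions), the joint density $h_m(x,u,y,v)$ of $(\mu(Z),\eta_m(Z),\pi(Z),\gamma_m(Z))$ and its derivatives $\partial_xh_m,\partial_yh_m$ exist for all $x,u,y,v$; with $h^Y_m(x,u,y,v)=\int_{-\infty}^yh_m(x,u,\check y,v)\,d\check y$, the derivatives $\partial_xh^Y_m,\partial_x^2h^Y_m$ exist for all $x,u,y,v$; and there exist nonnegative functions $\bar h_{m,i}(u,v),\bar h^Y_{m,i}(u,v)$, $i=0,1,2$, with \[ h_m\le\bar h_{m,0},\ |\partial_xh_m|\le\bar h_{m,1},\ |\partial_yh_m|\le\bar h_{m,2},\quad h_m^Y\le\bar h^Y_{m,0},\ |\partial_xh^Y_m|\le\bar h^Y_{m,1},\ |\partial_x^2h^Y_m|\le\bar h^Y_{m,2} \] for all $x,u,y,v$, and \[ \sup_m\iint(1+|u|+|v|)^r\bar h_{m,i}(u,v)\,du\,dv<\infty,\quad \sup_m\iint(1+|u|+|v|)^r\bar h^Y_{m,i}(u,v)\,du\,dv<\infty \] for $i=0,1,2$ and $r=1,2$. Then if $(x_m,y_m)\to(x,y)$ and $f_\mu(x)\neq0$, \[ \partial_xG_{\tilde\mu_m,\tilde\pi_m}(x_m,y_m)\to\partial_xG_{\mu,\pi}(x,y),\qquad \partial_yG_{\tilde\mu_m,\tilde\pi_m}(x_m,y_m)\to\partial_yG_{\mu,\pi}(x,y). \]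
   Context: Let $Z$ be a random vector with values in $\Omega\subseteq\mathbb{R}^d$ and distribution $P$; $\mu,\pi:\Omega\to\mathbb{R}$ measurable; $f_\mu$ is the density of $\mu(Z)$. For each $m$, $\tilde\mu_m,\tilde\pi_m:\Omega\to\mathbb{R}$ are random functions fitted from a sample independent of $Z$; $\Pr_m$ is probability conditional on them (with $Z\sim P$). $G_{\mu,\pi}(x,y)=\Pr\{\pi(Z)\le y\mid\mu(Z)=x\}$ and $G_{\tilde\mu_m,\tilde\pi_m}(x,y)=\Pr_m\{\tilde\pi_m(Z)\le y\mid\tilde\mu_m(Z)=x\}$. $\|g\|_\infty$ is the $P$-essential supremum of $|g|$. Assumption (A): deterministic $a_m\to0$ with $\|\tilde\mu_m-\mu\|_\infty=\mathcal{O}_{\rm P}(a_m)$, $\|\tilde\pi_m-\pi\|_\infty=\mathcal{O}_{\rm P}(a_m)$ for large $m$. $\eta_m=a_m^{-1}(\tilde\mu_m-\mu)$, $\gamma_m=a_m^{-1}(\tilde\pi_m-\pi)$. *)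

theory Defs
  imports "HOL-Probability.Probability"
begin

definition ess_norm :: "'a measure \<Rightarrow> ('a \<Rightarrow> real) \<Rightarrow> ereal" where
  "ess_norm P g = esssup P (\<lambda>z. ereal \<bar>g z\<bar>)"

definition pt_density :: "'a measure \<Rightarrow> ('a \<Rightarrow> real) \<Rightarrow> real \<Rightarrow> real" where
  "pt_density P f x =
     Lim (at_right (0::real))
       (\<lambda>d. measure P {z \<in> space P. \<bar>f z - x\<bar> \<le> d} / (2 * d))"

text \<open>G_{f,g}(x,y) = Pr{ g(Z) \<le> y | f(Z) = x }, Z ~ P, defined as the limit
  of the elementary conditional probabilities given |f(Z) - x| \<le> d, d to 0+.\<close>
definition cond_cdf :: "'a measure \<Rightarrow> ('a \<Rightarrow> real) \<Rightarrow> ('a \<Rightarrow> real) \<Rightarrow> real \<Rightarrow> real \<Rightarrow> real" where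
  "cond_cdf P f g x y =
     Lim (at_right (0::real))
       (\<lambda>d. measure P {z \<in> space P. g z \<le> y \<and> \<bar>f z - x\<bar> \<le> d}
            / measure P {z \<in> space P. \<bar>f z - x\<bar> \<le> d})"

definition int_upto :: "(real \<Rightarrow> real \<Rightarrow> real \<Rightarrow> real \<Rightarrow> real) \<Rightarrow> real \<Rightarrow> real \<Rightarrow> real \<Rightarrow> real \<Rightarrow> real" where
  "int_upto h x u y v = (LINT t:{..y}|lborel. h x u t v)"

end

theory Submission
  imports Defs
begin

lemma lip_of_deriv:
  fixes g :: "real \<Rightarrow> real"
  assumes "\<And>x. g differentiable (at x)" "\<And>x. \<bar>deriv g x\<bar> \<le> B"
  shows "\<bar>g x - g x'\<bar> \<le> B * \<bar>x - x'\<bar>"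
proof -
  have "norm (g x - g x') \<le> B * norm (x - x')"
    by (rule field_differentiable_bound[of UNIV g "deriv g"])
       (use assms in \<open>auto simp: DERIV_deriv_iff_real_differentiable\<close>)
  thus ?thesis by simp
qed

lemma taylor_lip:
  fixes g :: "real \<Rightarrow> real"
  assumes d: "\<And>x. g differentiable (at x)"
    and L: "\<And>x x'. \<bar>deriv g x - deriv g x'\<bar> \<le> L * \<bar>x - x'\<bar>"
  shows "\<bar>g (x + e) - g x - e * deriv g x\<bar> \<le> L * e\<^sup>2"
proof -
  define \<phi> where "\<phi> s = g s - s * deriv g x" for s
  have D0: "(\<phi> has_field_derivative (deriv g z - deriv g x)) (at z)" for z
    unfolding \<phi>_def using d[of z]
    by (auto intro!: derivative_eq_intros simp: DERIV_deriv_iff_real_differentiable[symmetric])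
  have D: "(\<phi> has_field_derivative (deriv g z - deriv g x)) (at z within cball x \<bar>e\<bar>)" for z
    using D0[of z] by (rule has_field_derivative_at_within)
  have B: "norm (deriv g z - deriv g x) \<le> L * \<bar>e\<bar>" if "z \<in> cball x \<bar>e\<bar>" for z
  proof -
    have "\<bar>deriv g z - deriv g x\<bar> \<le> L * \<bar>z - x\<bar>" by (rule L)
    moreover have "L \<ge> 0" using L[of 1 0] by simp
    moreover have "\<bar>z - x\<bar> \<le> \<bar>e\<bar>" using that by (simp add: dist_real_def abs_minus_commute)
    ultimately show ?thesis by (simp add: mult_left_mono order_trans)
  qed
  have "norm (\<phi> (x + e) - \<phi> x) \<le> L * \<bar>e\<bar> * norm (x + e - x)"
    by (rule field_differentiable_bound[OF convex_cball D B]) (auto simp: dist_real_def)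
  thus ?thesis by (simp add: \<phi>_def algebra_simps power2_eq_square abs_mult)
qed

lemma deriv_from_bound:
  fixes g :: "real \<Rightarrow> real"
  assumes "\<And>e. \<bar>g (x + e) - g x - e * L\<bar> \<le> C * e\<^sup>2"
  shows "(g has_real_derivative L) (at x)"
proof -
  have "((\<lambda>e. (g (x + e) - g x) / e - L) \<longlongrightarrow> 0) (at 0)"
  proof (rule Lim_null_comparison)
    show "\<forall>\<^sub>F e in at 0. norm ((g (x + e) - g x) / e - L) \<le> C * \<bar>e\<bar>"
      unfolding eventually_at_filter
    proof (intro always_eventually allI impI)
      fix e :: real assume "e \<noteq> 0"
      have "(g (x + e) - g x) / e - L = (g (x + e) - g x - e * L) / e" using \<open>e \<noteq> 0\<close> by (simp add: field_simps)
      also have "norm \<dots> \<le> C * e\<^sup>2 / \<bar>e\<bar>" using assms[of e] \<open>e \<noteq> 0\<close>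
        by (simp add: divide_right_mono)
      also have "\<dots> = C * \<bar>e\<bar>"
      proof -
        show ?thesis using \<open>e \<noteq> 0\<close>
          by (cases "e > 0") (auto simp: power2_eq_square abs_of_pos abs_of_neg)
      qed
      finally show "norm ((g (x + e) - g x) / e - L) \<le> C * \<bar>e\<bar>" .
    qed
    show "((\<lambda>e. C * \<bar>e\<bar>) \<longlongrightarrow> 0) (at 0)"
      by (auto intro!: tendsto_eq_intros)
  qed
  thus ?thesis unfolding DERIV_def by (simp add: LIM_zero_iff)
qed

lemma deriv_le_lip:
  fixes g :: "real \<Rightarrow> real"
  assumes "g differentiable (at x)" "\<And>x'. \<bar>g x' - g x\<bar> \<le> L * \<bar>x' - x\<bar>"
  shows "\<bar>deriv g x\<bar> \<le> L"
proof -
  have "((\<lambda>y. (g y - g x) / (y - x)) \<longlongrightarrow> deriv g x) (at x)"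
    using assms(1) by (simp add: DERIV_deriv_iff_real_differentiable[symmetric] has_field_derivative_iff)
  hence "((\<lambda>y. \<bar>(g y - g x) / (y - x)\<bar>) \<longlongrightarrow> \<bar>deriv g x\<bar>) (at x)" by (rule tendsto_rabs)
  moreover have "\<forall>\<^sub>F y in at x. \<bar>(g y - g x) / (y - x)\<bar> \<le> L"
    unfolding eventually_at_filter
  proof (intro always_eventually allI impI)
    fix y assume "y \<noteq> x"
    thus "\<bar>(g y - g x) / (y - x)\<bar> \<le> L" using assms(2)[of y]
      by (simp add: abs_divide divide_le_eq)
  qed
  ultimately show ?thesis by (rule tendsto_upperbound) simp
qed

lemma lim_taylor:
  fixes G G' :: "nat \<Rightarrow> real \<Rightarrow> real"
  assumes T: "\<And>n x e. \<bar>G n (x + e) - G n x - e * G' n x\<bar> \<le> C * e\<^sup>2"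
    and cv: "\<And>x. convergent (\<lambda>n. G n x)" and C: "C \<ge> 0"
  shows "convergent (\<lambda>n. G' n x)"
proof -
  have "Cauchy (\<lambda>n. G' n x)"
  proof (rule CauchyI)
    fix e :: real assume e: "e > 0"
    define d where "d = e / (4 * C + 4)"
    have d: "d > 0" using e C by (simp add: d_def)
    have "Cauchy (\<lambda>n. G n (x + d))" "Cauchy (\<lambda>n. G n x)" using cv by (auto simp: Cauchy_convergent_iff)
    moreover have "e * d / 4 > 0" using d e by simp
    ultimately obtain M1 M2 where M1: "\<forall>m\<ge>M1. \<forall>n\<ge>M1. norm (G m (x + d) - G n (x + d)) < e * d / 4"
      and M2: "\<forall>m\<ge>M2. \<forall>n\<ge>M2. norm (G m x - G n x) < e * d / 4"
      by (metis CauchyD)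
    show "\<exists>M. \<forall>m\<ge>M. \<forall>n\<ge>M. norm (G' m x - G' n x) < e"
    proof (intro exI[of _ "max M1 M2"] allI impI)
      fix m n assume "max M1 M2 \<le> m" "max M1 M2 \<le> n"
      hence a: "\<bar>G m (x + d) - G n (x + d)\<bar> < e * d / 4" and b: "\<bar>G m x - G n x\<bar> < e * d / 4"
        using M1 M2 by auto
      have "d * \<bar>G' m x - G' n x\<bar> = \<bar>d * (G' m x - G' n x)\<bar>" using d by (simp add: abs_mult)
      also have "\<dots> = \<bar>(G m (x + d) - G m x - d * G' m x) - (G n (x + d) - G n x - d * G' n x)
               - (G m (x + d) - G n (x + d)) + (G m x - G n x)\<bar>"
        by (simp add: algebra_simps)
      also have "\<dots> \<le> C * d\<^sup>2 + C * d\<^sup>2 + e * d / 4 + e * d / 4"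
        using T[of m x d] T[of n x d] a b by linarith
      also have "\<dots> = d * (2 * C * d + e / 2)" by (simp add: algebra_simps power2_eq_square)
      finally have "\<bar>G' m x - G' n x\<bar> \<le> 2 * C * d + e / 2" using d by (simp add: mult_le_cancel_left_pos)
      also have "2 * C * d < e / 2" using e C by (simp add: d_def field_simps)
      finally show "norm (G' m x - G' n x) < e" by simp
    qed
  qed
  thus ?thesis by (simp add: Cauchy_convergent_iff)
qed

lemma lim_taylor2:
  fixes G G' :: "nat \<Rightarrow> real \<Rightarrow> real"
  assumes T: "\<And>n x e. \<bar>G n (x + e) - G n x - e * G' n x\<bar> \<le> C * e\<^sup>2"
    and cv: "\<And>x. convergent (\<lambda>n. G n x)" and C: "C \<ge> 0"
  shows "\<bar>lim (\<lambda>n. G n (x + e)) - lim (\<lambda>n. G n x) - e * lim (\<lambda>n. G' n x)\<bar> \<le> C * e\<^sup>2"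
proof -
  have c': "convergent (\<lambda>n. G' n x)" by (rule lim_taylor[OF T cv C])
  have "(\<lambda>n. \<bar>G n (x + e) - G n x - e * G' n x\<bar>) \<longlonglongrightarrow>
        \<bar>lim (\<lambda>n. G n (x + e)) - lim (\<lambda>n. G n x) - e * lim (\<lambda>n. G' n x)\<bar>"
    using cv[of "x+e"] cv[of x] c' by (intro tendsto_intros) (auto simp: convergent_LIMSEQ_iff)
  thus ?thesis by (rule LIMSEQ_le_const2) (use T in auto)
qed

lemma abs_integral_diff_le:
  fixes f g w :: "'a \<Rightarrow> real"
  assumes "integrable M f" "integrable M g" "integrable M w" "AE x in M. \<bar>f x - g x\<bar> \<le> w x"
  shows "\<bar>integral\<^sup>L M f - integral\<^sup>L M g\<bar> \<le> integral\<^sup>L M w"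
proof -
  have "integral\<^sup>L M f - integral\<^sup>L M g = integral\<^sup>L M (\<lambda>x. f x - g x)"
    using assms by (simp add: integral_diff)
  also have "\<bar>\<dots>\<bar> \<le> integral\<^sup>L M (\<lambda>x. \<bar>f x - g x\<bar>)" by (rule integral_abs_bound)
  also have "\<dots> \<le> integral\<^sup>L M w"
    using assms by (intro integral_mono_AE) auto
  finally show ?thesis .
qed

lemma nn_le_integrable:
  fixes g :: "'a \<Rightarrow> real"
  assumes "g \<in> borel_measurable M" "\<And>x. g x \<ge> 0" "(\<integral>\<^sup>+ x. ennreal (g x) \<partial>M) \<le> ennreal K" "K \<ge> 0"
  shows "integrable M g" "integral\<^sup>L M g \<le> K"
proof -
  have "(\<integral>\<^sup>+ x. ennreal (g x) \<partial>M) < \<infinity>"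
    by (rule le_less_trans[OF assms(3)]) simp
  thus i: "integrable M g"
    using assms by (intro integrableI_nonneg) auto
  have "ennreal (integral\<^sup>L M g) \<le> ennreal K"
    using nn_integral_eq_integral[OF i] assms by simp
  thus "integral\<^sup>L M g \<le> K" using assms(4) by simp
qed

lemma fst_bm[measurable]: "(fst :: real \<times> real \<Rightarrow> real) \<in> borel_measurable borel"
  by (rule borel_measurable_continuous_onI) (intro continuous_intros)
lemma snd_bm[measurable]: "(snd :: real \<times> real \<Rightarrow> real) \<in> borel_measurable borel"
  by (rule borel_measurable_continuous_onI) (intro continuous_intros)
lemma fst_lbm[measurable]: "(fst :: real \<times> real \<Rightarrow> real) \<in> borel_measurable lborel"
  using fst_bm by simp
lemma snd_lbm[measurable]: "(snd :: real \<times> real \<Rightarrow> real) \<in> borel_measurable lborel"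
  using snd_bm by simp
lemma le_abs_w: "0 \<le> (y::real) \<Longrightarrow> 1 \<le> w \<Longrightarrow> y \<le> \<bar>w * y\<bar>"
  by (simp add: abs_mult mult_le_cancel_right1)

locale RD =
  fixes P :: "'a measure" and X :: "'a \<Rightarrow> real \<times> real \<times> real \<times> real"
    and h :: "real \<Rightarrow> real \<Rightarrow> real \<Rightarrow> real \<Rightarrow> real"
    and hb hbY :: "nat \<Rightarrow> real \<Rightarrow> real \<Rightarrow> real" and K :: real
  assumes P: "prob_space P"
  and distr: "distributed P lborel X (\<lambda>(x, u, y, v). ennreal (h x u y v))"
  and hnn: "\<And>x u y v. h x u y v \<ge> 0"
  and dhx: "\<And>x u y v. (\<lambda>x'. h x' u y v) differentiable (at x)"
  and dhy: "\<And>x u y v. (\<lambda>y'. h x u y' v) differentiable (at y)"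
  and dHx: "\<And>x u y v. (\<lambda>x'. int_upto h x' u y v) differentiable (at x)"
  and dHxx: "\<And>x u y v. (\<lambda>x'. deriv (\<lambda>x''. int_upto h x'' u y v) x') differentiable (at x)"
  and hbnn: "\<And>i u v. i \<le> 2 \<Longrightarrow> hb i u v \<ge> 0 \<and> hbY i u v \<ge> 0"
  and hbm: "\<And>i. i \<le> 2 \<Longrightarrow> (\<lambda>(u, v). hb i u v) \<in> borel_measurable lborel
                   \<and> (\<lambda>(u, v). hbY i u v) \<in> borel_measurable lborel"
  and bnd: "\<And>x u y v. h x u y v \<le> hb 0 u v
             \<and> \<bar>deriv (\<lambda>x'. h x' u y v) x\<bar> \<le> hb 1 u v
             \<and> \<bar>deriv (\<lambda>y'. h x u y' v) y\<bar> \<le> hb 2 u v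
             \<and> int_upto h x u y v \<le> hbY 0 u v
             \<and> \<bar>deriv (\<lambda>x'. int_upto h x' u y v) x\<bar> \<le> hbY 1 u v
             \<and> \<bar>deriv (\<lambda>x'. deriv (\<lambda>x''. int_upto h x'' u y v) x') x\<bar> \<le> hbY 2 u v"
  and K_nn: "K \<ge> 0"
  and mom: "\<And>i. i \<le> 2 \<Longrightarrow>
               (\<integral>\<^sup>+ (u, v). ennreal ((1 + \<bar>u\<bar> + \<bar>v\<bar>) ^ 1 * hb i u v) \<partial>(lborel :: (real \<times> real) measure)) \<le> ennreal K
             \<and> (\<integral>\<^sup>+ (u, v). ennreal ((1 + \<bar>u\<bar> + \<bar>v\<bar>) ^ 1 * hbY i u v) \<partial>(lborel :: (real \<times> real) measure)) \<le> ennreal K"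
begin

lemma h_meas: "(\<lambda>(x, u, y, v). h x u y v) \<in> borel_measurable borel"
proof -
  have "(\<lambda>(x, u, y, v). ennreal (h x u y v)) \<in> borel_measurable lborel"
    using distributed_borel_measurable[OF distr] .
  hence "(\<lambda>p. ennreal ((\<lambda>(x, u, y, v). h x u y v) p)) \<in> borel_measurable lborel"
    by (simp add: case_prod_beta')
  hence "(\<lambda>(x, u, y, v). h x u y v) \<in> borel_measurable lborel"
    by (subst (asm) borel_measurable_ennreal_iff) (auto simp: hnn split: prod.splits)
  thus ?thesis by simp
qed

lemma h_comp[measurable (raw)]:
  assumes [measurable]: "f1 \<in> borel_measurable M" "f2 \<in> borel_measurable M" "f3 \<in> borel_measurable M" "f4 \<in> borel_measurable M"
  shows "(\<lambda>p. h (f1 p) (f2 p) (f3 p) (f4 p)) \<in> borel_measurable M"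
proof -
  have "(\<lambda>p. (f1 p, f2 p, f3 p, f4 p)) \<in> M \<rightarrow>\<^sub>M (borel \<Otimes>\<^sub>M (borel \<Otimes>\<^sub>M (borel \<Otimes>\<^sub>M borel)))"
    by measurable
  hence "(\<lambda>p. (f1 p, f2 p, f3 p, f4 p)) \<in> M \<rightarrow>\<^sub>M (borel :: (real \<times> real \<times> real \<times> real) measure)"
    by (simp only: borel_prod)
  from measurable_compose[OF this h_meas] show ?thesis by simp
qed

lemma hb_comp[measurable (raw)]:
  assumes i: "i \<le> 2" and [measurable]: "f1 \<in> borel_measurable M" "f2 \<in> borel_measurable M"
  shows "(\<lambda>p. hb i (f1 p) (f2 p)) \<in> borel_measurable M" "(\<lambda>p. hbY i (f1 p) (f2 p)) \<in> borel_measurable M"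
proof -
  have "(\<lambda>p. (f1 p, f2 p)) \<in> M \<rightarrow>\<^sub>M (borel \<Otimes>\<^sub>M borel)"
    by measurable
  hence m: "(\<lambda>p. (f1 p, f2 p)) \<in> M \<rightarrow>\<^sub>M (borel :: (real \<times> real) measure)"
    by (simp only: borel_prod)
  have "(\<lambda>(u, v). hb i u v) \<in> borel_measurable borel" "(\<lambda>(u, v). hbY i u v) \<in> borel_measurable borel"
    using hbm[OF i] by auto
  from measurable_compose[OF m this(1)] measurable_compose[OF m this(2)]
  show "(\<lambda>p. hb i (f1 p) (f2 p)) \<in> borel_measurable M" "(\<lambda>p. hbY i (f1 p) (f2 p)) \<in> borel_measurable M" by simp_all
qed

definition wt :: "real \<times> real \<Rightarrow> real" where "wt p = 1 + \<bar>fst p\<bar> + \<bar>snd p\<bar>"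

lemma wt_ge1: "wt p \<ge> 1" by (simp add: wt_def)

lemma mom_int:
  assumes "i \<le> 2"
  shows "integrable lborel (\<lambda>p. wt p * hb i (fst p) (snd p))"
        "(\<integral>p. wt p * hb i (fst p) (snd p) \<partial>lborel) \<le> K"
        "integrable lborel (\<lambda>p. wt p * hbY i (fst p) (snd p))"
        "(\<integral>p. wt p * hbY i (fst p) (snd p) \<partial>lborel) \<le> K"
proof -
  have [measurable]: "wt \<in> borel_measurable borel" unfolding wt_def
    by (intro borel_measurable_continuous_onI continuous_intros)
  have eq: "(\<lambda>(u, v). ennreal ((1 + \<bar>u\<bar> + \<bar>v\<bar>) ^ 1 * f u v)) = (\<lambda>p. ennreal (wt p * f (fst p) (snd p)))" for f
    by (auto simp: wt_def fun_eq_iff)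
  note m = mom[OF assms, unfolded eq]
  have nn: "wt p * hb i (fst p) (snd p) \<ge> 0" "wt p * hbY i (fst p) (snd p) \<ge> 0" for p
    using hbnn[OF assms] wt_ge1[of p] by auto
  have m1: "(\<lambda>p. wt p * hb i (fst p) (snd p)) \<in> borel_measurable lborel"
  proof -
    have "(\<lambda>p. wt p * hb i (fst p) (snd p)) \<in> borel_measurable borel"
      by (intro borel_measurable_times hb_comp(1)[OF assms] fst_bm snd_bm) simp
    thus ?thesis by simp
  qed
  have m2: "(\<lambda>p. wt p * hbY i (fst p) (snd p)) \<in> borel_measurable lborel"
  proof -
    have "(\<lambda>p. wt p * hbY i (fst p) (snd p)) \<in> borel_measurable borel"
      by (intro borel_measurable_times hb_comp(2)[OF assms] fst_bm snd_bm) simp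
    thus ?thesis by simp
  qed
  show "integrable lborel (\<lambda>p. wt p * hb i (fst p) (snd p))"
        "(\<integral>p. wt p * hb i (fst p) (snd p) \<partial>lborel) \<le> K"
    using nn_le_integrable[OF m1 nn(1) conjunct1[OF m] K_nn] by blast+
  show "integrable lborel (\<lambda>p. wt p * hbY i (fst p) (snd p))"
        "(\<integral>p. wt p * hbY i (fst p) (snd p) \<partial>lborel) \<le> K"
    using nn_le_integrable[OF m2 nn(2) conjunct2[OF m] K_nn] by blast+
qed

lemma hb_int:
  assumes "i \<le> 2"
  shows "integrable lborel (\<lambda>p. hb i (fst p) (snd p))" "integrable lborel (\<lambda>p. hbY i (fst p) (snd p))"
proof -
  show "integrable lborel (\<lambda>p. hb i (fst p) (snd p))"
    by (rule Bochner_Integration.integrable_bound[OF mom_int(1)[OF assms]])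
       (use assms hbnn[OF assms] wt_ge1 in \<open>auto intro!: AE_I2 le_abs_w\<close>)
  show "integrable lborel (\<lambda>p. hbY i (fst p) (snd p))"
    by (rule Bochner_Integration.integrable_bound[OF mom_int(3)[OF assms]])
       (use assms hbnn[OF assms] wt_ge1 in \<open>auto intro!: AE_I2 le_abs_w\<close>)
qed

end

context RD begin

definition DH where "DH x u y v = deriv (\<lambda>x'. int_upto h x' u y v) x"

definition good where "good u v \<longleftrightarrow> (\<forall>x. integrable lborel (\<lambda>t. h x u t v))"

lemma HY_eq: "int_upto h x u y v = (\<integral>t. indicator {..y} t * h x u t v \<partial>lborel)"
  by (simp add: int_upto_def set_lebesgue_integral_def)

lemma HY_nn: "int_upto h x u y v \<ge> 0"
  unfolding HY_eq using hnn by (intro Bochner_Integration.integral_nonneg) (simp add: indicator_def)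

lemma HY_le: "int_upto h x u y v \<le> hbY 0 u v"
  using bnd by blast

lemma DH_le: "\<bar>DH x u y v\<bar> \<le> hbY 1 u v"
  using bnd unfolding DH_def by blast

lemma h_le: "h x u y v \<le> hb 0 u v"
  using bnd by blast

lemma h_lip: "\<bar>h x u y v - h x' u y' v\<bar> \<le> hb 1 u v * \<bar>x - x'\<bar> + hb 2 u v * \<bar>y - y'\<bar>"
proof -
  have 1: "\<bar>h x u y v - h x' u y v\<bar> \<le> hb 1 u v * \<bar>x - x'\<bar>"
    by (rule lip_of_deriv[where g="\<lambda>x. h x u y v"]) (use dhx bnd in auto)
  have 2: "\<bar>h x' u y v - h x' u y' v\<bar> \<le> hb 2 u v * \<bar>y - y'\<bar>"
    by (rule lip_of_deriv[where g="\<lambda>y. h x' u y v"]) (use dhy bnd in auto)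
  show ?thesis using 1 2 by linarith
qed

lemma HY_lipx: "\<bar>int_upto h x u y v - int_upto h x' u y v\<bar> \<le> hbY 1 u v * \<bar>x - x'\<bar>"
  by (rule lip_of_deriv[where g="\<lambda>x. int_upto h x u y v"]) (use dHx bnd in auto)

lemma DH_lipx: "\<bar>DH x u y v - DH x' u y v\<bar> \<le> hbY 2 u v * \<bar>x - x'\<bar>"
  unfolding DH_def
  by (rule lip_of_deriv[where g="\<lambda>x. deriv (\<lambda>x'. int_upto h x' u y v) x"]) (use dHxx bnd in auto)

lemma HY_taylor: "\<bar>int_upto h (x + e) u y v - int_upto h x u y v - e * DH x u y v\<bar> \<le> hbY 2 u v * e\<^sup>2"
  unfolding DH_def
  by (rule taylor_lip[where g="\<lambda>x. int_upto h x u y v"]) (use dHx DH_lipx in \<open>auto simp: DH_def\<close>)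

lemma h_int_ind:
  assumes "good u v" "A \<in> sets borel"
  shows "integrable lborel (\<lambda>t. indicator A t * h x u t v)"
  using integrable_mult_indicator[of A lborel "\<lambda>t. h x u t v"] assms by (simp add: good_def)

lemma HY_ydiff:
  assumes g: "good u v" and "y' \<le> y"
  shows "int_upto h x u y v - int_upto h x u y' v = (\<integral>t. indicator {y'<..y} t * h x u t v \<partial>lborel)"
proof -
  have "int_upto h x u y v - int_upto h x u y' v =
        (\<integral>t. indicator {..y} t * h x u t v - indicator {..y'} t * h x u t v \<partial>lborel)"
    unfolding HY_eq by (rule Bochner_Integration.integral_diff[symmetric]) (auto intro!: h_int_ind g)
  also have "\<dots> = (\<integral>t. indicator {y'<..y} t * h x u t v \<partial>lborel)"
    using \<open>y' \<le> y\<close> by (intro Bochner_Integration.integral_cong) (auto simp: indicator_def)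
  finally show ?thesis .
qed

lemma int_Ioc_ind: "integrable lborel (indicator {a<..b} :: real \<Rightarrow> real)"
proof (cases "a \<le> b")
  case True thus ?thesis by (intro integrable_real_indicator) auto
next
  case False hence "{a<..b} = {}" by auto
  thus ?thesis by simp
qed

lemma int_Ioc_bound:
  fixes f :: "real \<Rightarrow> real"
  assumes "a \<le> b" "integrable lborel (\<lambda>t. indicator {a<..b} t * f t)" "\<And>t. a < t \<Longrightarrow> t \<le> b \<Longrightarrow> \<bar>f t\<bar> \<le> B"
  shows "\<bar>\<integral>t. indicator {a<..b} t * f t \<partial>lborel\<bar> \<le> B * (b - a)"
proof -
  have i: "integrable lborel (\<lambda>t. indicator {a<..b} t * B)"
    using integrable_indicator[of "{a<..b}" lborel B] int_Ioc_ind by simp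
  have "\<bar>\<integral>t. indicator {a<..b} t * f t \<partial>lborel\<bar> \<le> (\<integral>t. indicator {a<..b} t * B \<partial>lborel)"
    by (rule integral_abs_bound_integral[OF assms(2) i]) (use assms in \<open>auto simp: indicator_def\<close>)
  also have "(\<integral>t. indicator {a<..b} t * B \<partial>lborel) = (\<integral>t. indicator {a<..b} t \<partial>lborel) * B"
    by (rule integral_mult_left_zero)
  also have "\<dots> = B * (b - a)" using assms(1) by simp
  finally show ?thesis .
qed

lemma HY_lipy:
  assumes g: "good u v"
  shows "\<bar>int_upto h x u y v - int_upto h x u y' v\<bar> \<le> hb 0 u v * \<bar>y - y'\<bar>"
proof -
  have *: "\<bar>int_upto h x u b v - int_upto h x u a v\<bar> \<le> hb 0 u v * (b - a)" if "a \<le> b" for a b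
    unfolding HY_ydiff[OF g that]
    by (rule int_Ioc_bound) (use that h_le hnn in \<open>auto intro!: h_int_ind g\<close>)
  show ?thesis
  proof (cases "y' \<le> y")
    case True thus ?thesis using *[OF True] by simp
  next
    case False thus ?thesis using *[of y y'] by (simp add: abs_minus_commute)
  qed
qed

lemma HY_mono:
  assumes g: "good u v" and "y' \<le> y"
  shows "int_upto h x u y' v \<le> int_upto h x u y v"
proof -
  have "0 \<le> (\<integral>t. indicator {y'<..y} t * h x u t v \<partial>lborel)"
    using hnn by (intro Bochner_Integration.integral_nonneg) (simp add: indicator_def)
  thus ?thesis using HY_ydiff[OF assms, of x] by linarith
qed

lemma HY_taylor_y:
  assumes g: "good u v"
  shows "\<bar>int_upto h x u (y + e) v - int_upto h x u y v - e * h x u y v\<bar> \<le> hb 2 u v * e\<^sup>2"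
proof -
  have *: "\<bar>int_upto h x u b v - int_upto h x u a v - (b - a) * h x u z v\<bar> \<le> hb 2 u v * (b - a) * (b - a)"
    if "a \<le> b" "a \<le> z" "z \<le> b" for a b z
  proof -
    have "int_upto h x u b v - int_upto h x u a v - (b - a) * h x u z v =
          (\<integral>t. indicator {a<..b} t * (h x u t v - h x u z v) \<partial>lborel)"
    proof -
      have "(\<integral>t. indicator {a<..b} t * (h x u t v - h x u z v) \<partial>lborel) =
            (\<integral>t. indicator {a<..b} t * h x u t v \<partial>lborel) - (\<integral>t. indicator {a<..b} t * h x u z v \<partial>lborel)"
        by (subst Bochner_Integration.integral_diff[symmetric])
           (auto simp: right_diff_distrib int_Ioc_ind intro!: h_int_ind g integrable_real_mult_indicator)
      also have "(\<integral>t. indicator {a<..b} t * h x u z v \<partial>lborel) = (b - a) * h x u z v"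
        using that int_Ioc_ind by simp
      finally show ?thesis using HY_ydiff[OF g that(1)] by simp
    qed
    also have "\<bar>\<dots>\<bar> \<le> (hb 2 u v * (b - a)) * (b - a)"
    proof (rule int_Ioc_bound[OF that(1)])
      show "integrable lborel (\<lambda>t. indicator {a<..b} t * (h x u t v - h x u z v))"
        by (auto simp: right_diff_distrib int_Ioc_ind intro!: h_int_ind g integrable_real_mult_indicator Bochner_Integration.integrable_diff)
      fix t assume t: "a < t" "t \<le> b"
      have "\<bar>h x u t v - h x u z v\<bar> \<le> hb 1 u v * \<bar>x - x\<bar> + hb 2 u v * \<bar>t - z\<bar>" by (rule h_lip)
      also have "\<dots> \<le> hb 2 u v * (b - a)"
        using t that hbnn[of 2 u v] by (auto intro!: mult_left_mono)
      finally show "\<bar>h x u t v - h x u z v\<bar> \<le> hb 2 u v * (b - a)" .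
    qed
    finally show ?thesis by simp
  qed
  show ?thesis
  proof (cases "e \<ge> 0")
    case True
    thus ?thesis using *[of y "y + e" y] by (simp add: power2_eq_square mult.assoc)
  next
    case False
    have "\<bar>int_upto h x u y v - int_upto h x u (y + e) v - (y - (y + e)) * h x u y v\<bar> \<le> hb 2 u v * (y - (y + e)) * (y - (y + e))"
      using False by (intro *) auto
    thus ?thesis by (simp add: power2_eq_square abs_minus_commute algebra_simps)
  qed
qed

lemma DH_lipy:
  assumes g: "good u v"
  shows "\<bar>DH x u y v - DH x u y' v\<bar> \<le> hb 1 u v * \<bar>y - y'\<bar>"
proof -
  have *: "\<bar>DH x u b v - DH x u a v\<bar> \<le> hb 1 u v * (b - a)" if "a \<le> b" for a b
  proof -
    define \<phi> where "\<phi> s = int_upto h s u b v - int_upto h s u a v" for s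
    have d1: "((\<lambda>s. int_upto h s u b v) has_real_derivative DH x u b v) (at x)"
      using dHx unfolding DH_def by (simp add: DERIV_deriv_iff_real_differentiable)
    have d2: "((\<lambda>s. int_upto h s u a v) has_real_derivative DH x u a v) (at x)"
      using dHx unfolding DH_def by (simp add: DERIV_deriv_iff_real_differentiable)
    have D: "(\<phi> has_real_derivative (DH x u b v - DH x u a v)) (at x)"
      unfolding \<phi>_def by (rule DERIV_diff[OF d1 d2])
    have d: "\<phi> differentiable (at x)" using D real_differentiable_def by blast
    have "deriv \<phi> x = DH x u b v - DH x u a v"
      by (rule DERIV_imp_deriv[OF D])
    moreover have "\<bar>deriv \<phi> x\<bar> \<le> hb 1 u v * (b - a)"
    proof (rule deriv_le_lip[OF d])
      fix x'
      have "\<phi> x' - \<phi> x = (\<integral>t. indicator {a<..b} t * (h x' u t v - h x u t v) \<partial>lborel)"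
        unfolding \<phi>_def HY_ydiff[OF g that]
        by (subst Bochner_Integration.integral_diff[symmetric]) (auto simp: right_diff_distrib intro!: h_int_ind g)
      also have "\<bar>\<dots>\<bar> \<le> (hb 1 u v * \<bar>x' - x\<bar>) * (b - a)"
      proof (rule int_Ioc_bound[OF that])
        show "integrable lborel (\<lambda>t. indicator {a<..b} t * (h x' u t v - h x u t v))"
          by (auto simp: right_diff_distrib intro!: h_int_ind g Bochner_Integration.integrable_diff)
        fix t
        have "\<bar>h x' u t v - h x u t v\<bar> \<le> hb 1 u v * \<bar>x' - x\<bar> + hb 2 u v * \<bar>t - t\<bar>" by (rule h_lip)
        thus "\<bar>h x' u t v - h x u t v\<bar> \<le> hb 1 u v * \<bar>x' - x\<bar>" by simp
      qed
      finally show "\<bar>\<phi> x' - \<phi> x\<bar> \<le> hb 1 u v * (b - a) * \<bar>x' - x\<bar>" by (simp add: mult_ac)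
    qed
    ultimately show ?thesis by simp
  qed
  show ?thesis
  proof (cases "y' \<le> y")
    case True thus ?thesis using *[OF True] by (simp add: abs_minus_commute)
  next
    case False thus ?thesis using *[of y y'] by (simp add: abs_minus_commute)
  qed
qed

lemma HY_lip2:
  assumes "good u v"
  shows "\<bar>int_upto h x u y v - int_upto h x' u y' v\<bar> \<le> hbY 1 u v * \<bar>x - x'\<bar> + hb 0 u v * \<bar>y - y'\<bar>"
  using HY_lipx[of x u y v x'] HY_lipy[OF assms, of x' y y'] by linarith

lemma DH_lip2:
  assumes "good u v"
  shows "\<bar>DH x u y v - DH x' u y' v\<bar> \<le> hbY 2 u v * \<bar>x - x'\<bar> + hb 1 u v * \<bar>y - y'\<bar>"
  using DH_lipx[of x u y v x'] DH_lipy[OF assms, of x' y y'] by linarith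

end

lemma lborel4: "(lborel :: (real \<times> real \<times> real \<times> real) measure) = lborel \<Otimes>\<^sub>M (lborel \<Otimes>\<^sub>M (lborel \<Otimes>\<^sub>M lborel))"
  by (simp only: lborel_prod)

lemma lborel2: "(lborel :: (real \<times> real) measure) = lborel \<Otimes>\<^sub>M lborel"
  by (simp only: lborel_prod)

lemma sf2: "sigma_finite_measure (lborel \<Otimes>\<^sub>M (lborel :: real measure))"
  by (intro sigma_finite_pair_measure sigma_finite_lborel)

lemma sf3: "sigma_finite_measure (lborel \<Otimes>\<^sub>M (lborel \<Otimes>\<^sub>M (lborel :: real measure)))"
  by (intro sigma_finite_pair_measure sigma_finite_lborel sf2)

lemma reorder:
  fixes G :: "real \<times> real \<times> real \<times> real \<Rightarrow> ennreal"
  assumes [measurable]: "G \<in> borel_measurable (lborel \<Otimes>\<^sub>M (lborel \<Otimes>\<^sub>M (lborel \<Otimes>\<^sub>M lborel)))"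
  shows "(\<integral>\<^sup>+ q. G q \<partial>lborel) =
         (\<integral>\<^sup>+ p. (\<integral>\<^sup>+ x. (\<integral>\<^sup>+ y. G (x, fst p, y, snd p) \<partial>lborel) \<partial>lborel) \<partial>lborel)"
proof -
  have "(\<integral>\<^sup>+ q. G q \<partial>lborel) = (\<integral>\<^sup>+ q. G q \<partial>(lborel \<Otimes>\<^sub>M (lborel \<Otimes>\<^sub>M (lborel \<Otimes>\<^sub>M lborel))))"
    by (simp only: lborel4)
  also have "\<dots> = (\<integral>\<^sup>+ x. (\<integral>\<^sup>+ r. G (x, r) \<partial>(lborel \<Otimes>\<^sub>M (lborel \<Otimes>\<^sub>M lborel))) \<partial>lborel)"
    by (rule sigma_finite_measure.nn_integral_fst[OF sf3, symmetric]) measurable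
  also have "\<dots> = (\<integral>\<^sup>+ x. (\<integral>\<^sup>+ u. (\<integral>\<^sup>+ s. G (x, u, s) \<partial>(lborel \<Otimes>\<^sub>M lborel)) \<partial>lborel) \<partial>lborel)"
    by (intro nn_integral_cong sigma_finite_measure.nn_integral_fst[OF sf2, symmetric]) measurable
  also have "\<dots> = (\<integral>\<^sup>+ x. (\<integral>\<^sup>+ u. (\<integral>\<^sup>+ y. (\<integral>\<^sup>+ v. G (x, u, y, v) \<partial>lborel) \<partial>lborel) \<partial>lborel) \<partial>lborel)"
    by (intro nn_integral_cong lborel.nn_integral_fst[symmetric]) measurable
  also have "\<dots> = (\<integral>\<^sup>+ u. (\<integral>\<^sup>+ x. (\<integral>\<^sup>+ y. (\<integral>\<^sup>+ v. G (x, u, y, v) \<partial>lborel) \<partial>lborel) \<partial>lborel) \<partial>lborel)"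
    by (rule lborel_pair.Fubini'[symmetric]) measurable
  also have "\<dots> = (\<integral>\<^sup>+ u. (\<integral>\<^sup>+ x. (\<integral>\<^sup>+ v. (\<integral>\<^sup>+ y. G (x, u, y, v) \<partial>lborel) \<partial>lborel) \<partial>lborel) \<partial>lborel)"
    by (rule nn_integral_cong, rule nn_integral_cong, rule lborel_pair.Fubini') measurable
  also have "\<dots> = (\<integral>\<^sup>+ u. (\<integral>\<^sup>+ v. (\<integral>\<^sup>+ x. (\<integral>\<^sup>+ y. G (x, u, y, v) \<partial>lborel) \<partial>lborel) \<partial>lborel) \<partial>lborel)"
    by (rule nn_integral_cong, rule lborel_pair.Fubini') measurable
  also have "\<dots> = (\<integral>\<^sup>+ p. (\<integral>\<^sup>+ x. (\<integral>\<^sup>+ y. G (x, fst p, y, snd p) \<partial>lborel) \<partial>lborel) \<partial>(lborel \<Otimes>\<^sub>M lborel))"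
  proof -
    have m: "(\<lambda>(u, v). \<integral>\<^sup>+ x. \<integral>\<^sup>+ y. G (x, u, y, v) \<partial>lborel \<partial>lborel) \<in> borel_measurable (lborel \<Otimes>\<^sub>M lborel)"
      by measurable
    show ?thesis using lborel.nn_integral_fst[OF m] by (simp add: case_prod_beta')
  qed
  also have "\<dots> = (\<integral>\<^sup>+ p. (\<integral>\<^sup>+ x. (\<integral>\<^sup>+ y. G (x, fst p, y, snd p) \<partial>lborel) \<partial>lborel) \<partial>lborel)"
    by (simp only: lborel2)
  finally show ?thesis .
qed

context RD begin

lemma h_cont_x: "isCont (\<lambda>x. h x u y v) x"
  using dhx differentiable_imp_continuous_within by blast

lemma h_meas_t[measurable]: "(\<lambda>t. h x u t v) \<in> borel_measurable borel"
  by measurable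

lemma h_meas_t'[measurable]: "(\<lambda>t. h x u t v) \<in> borel_measurable lborel"
  by simp

lemma G_meas: "(\<lambda>q. ennreal (h (fst q) (fst (snd q)) (fst (snd (snd q))) (snd (snd (snd q)))))
                 \<in> borel_measurable (lborel \<Otimes>\<^sub>M (lborel \<Otimes>\<^sub>M (lborel \<Otimes>\<^sub>M lborel)))"
  by measurable

lemma total: "(\<integral>\<^sup>+ q. ennreal (h (fst q) (fst (snd q)) (fst (snd (snd q))) (snd (snd (snd q)))) \<partial>lborel) = 1"
proof -
  interpret prob_space P by (rule P)
  have "emeasure P (X -` UNIV \<inter> space P) = (\<integral>\<^sup>+ q. (\<lambda>(x, u, y, v). ennreal (h x u y v)) q * indicator UNIV q \<partial>lborel)"
    by (rule distributed_emeasure[OF distr]) simp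
  moreover have "X -` UNIV \<inter> space P = space P" by simp
  ultimately show ?thesis by (simp add: case_prod_beta' emeasure_space_1)
qed

lemma fiber_int_bound:
  assumes "integrable lborel (\<lambda>t. h x u t v)"
  shows "(\<integral>\<^sup>+ t. ennreal (h x u t v) \<partial>lborel) \<le> ennreal (hbY 0 u v)"
proof -
  have lim: "(\<lambda>k. \<integral>\<^sup>+ t. ennreal (indicator {..real k} t * h x u t v) \<partial>lborel) \<longlonglongrightarrow> (\<integral>\<^sup>+ t. ennreal (h x u t v) \<partial>lborel)"
  proof (rule nn_integral_LIMSEQ)
    show "incseq (\<lambda>k t. ennreal (indicator {..real k} t * h x u t v))"
      by (auto simp: incseq_def le_fun_def indicator_def hnn intro!: ennreal_leI)
    show "\<And>k. (\<lambda>t. ennreal (indicator {..real k} t * h x u t v)) \<in> borel_measurable lborel"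
      by measurable
    fix t
    show "(\<lambda>k. ennreal (indicator {..real k} t * h x u t v)) \<longlonglongrightarrow> ennreal (h x u t v)"
    proof (rule tendsto_eventually)
      obtain N :: nat where "t \<le> real N" using real_arch_simple by blast
      hence "\<forall>k\<ge>N. ennreal (indicator {..real k} t * h x u t v) = ennreal (h x u t v)"
        by (auto simp: indicator_def)
      thus "\<forall>\<^sub>F k in sequentially. ennreal (indicator {..real k} t * h x u t v) = ennreal (h x u t v)"
        by (auto simp: eventually_sequentially)
    qed
  qed
  have "(\<integral>\<^sup>+ t. ennreal (indicator {..real k} t * h x u t v) \<partial>lborel) \<le> ennreal (hbY 0 u v)" for k
  proof -
    have "(\<integral>\<^sup>+ t. ennreal (indicator {..real k} t * h x u t v) \<partial>lborel) = ennreal (int_upto h x u (real k) v)"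
      unfolding HY_eq
      by (rule nn_integral_eq_integral)
         (use assms in \<open>auto intro!: integrable_mult_indicator[where 'b=real, simplified] simp: hnn\<close>)
    also have "\<dots> \<le> ennreal (hbY 0 u v)" using HY_le by (rule ennreal_leI)
    finally show ?thesis .
  qed
  thus ?thesis using lim by (intro LIMSEQ_le_const2) auto
qed

lemma fatou_good:
  assumes ae: "AE x in lborel. (\<integral>\<^sup>+ t. ennreal (h x u t v) \<partial>lborel) \<noteq> \<infinity>"
  shows "good u v"
  unfolding good_def
proof
  fix x0
  let ?N = "\<lambda>x. (\<integral>\<^sup>+ t. ennreal (h x u t v) \<partial>lborel)"
  from ae obtain Z where Z: "{x \<in> space lborel. \<not> ?N x \<noteq> \<infinity>} \<subseteq> Z" "emeasure lborel Z = 0" "Z \<in> sets lborel"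
    by (rule AE_E)
  have ex: "\<exists>x. \<bar>x - x0\<bar> < 1 / Suc n \<and> ?N x \<noteq> \<infinity>" for n
  proof (rule ccontr)
    assume "\<not> ?thesis"
    hence "{x0 - 1 / Suc n <..< x0 + 1 / Suc n} \<subseteq> Z" using Z(1) by (auto simp: abs_less_iff)
    hence "emeasure lborel {x0 - 1 / Suc n <..< x0 + 1 / Suc n} \<le> emeasure lborel Z"
      using Z(3) by (intro emeasure_mono) auto
    also have "\<dots> = 0" using Z(2) by auto
    finally have "ennreal (x0 + 1 / Suc n - (x0 - 1 / Suc n)) \<le> 0"
      by (subst emeasure_lborel_Ioo[symmetric]) (auto simp del: emeasure_lborel_Ioo)
    hence "x0 + 1 / Suc n - (x0 - 1 / Suc n) \<le> 0"
      using ennreal_eq_0_iff le_zero_eq by blast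
    moreover have "x0 + 1 / Suc n - (x0 - 1 / Suc n) > 0" by simp
    ultimately show False by linarith
  qed
  then obtain xs where xs: "\<And>n. \<bar>xs n - x0\<bar> < 1 / Suc n" "\<And>n. ?N (xs n) \<noteq> \<infinity>" by metis
  have xs_lim: "xs \<longlonglongrightarrow> x0"
  proof -
    have "(\<lambda>n. xs n - x0) \<longlonglongrightarrow> 0"
    proof (rule Lim_null_comparison[OF _ LIMSEQ_Suc[OF lim_inverse_n']])
      show "\<forall>\<^sub>F n in sequentially. norm (xs n - x0) \<le> 1 / real (Suc n)"
        using xs(1) by (auto intro!: always_eventually less_imp_le)
    qed
    thus ?thesis by (simp add: LIM_zero_iff)
  qed
  have int_n: "integrable lborel (\<lambda>t. h (xs n) u t v)" for n
    using xs(2)[of n] by (intro integrableI_nonneg) (auto simp: hnn less_top)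
  have bn: "?N (xs n) \<le> ennreal (hbY 0 u v)" for n by (rule fiber_int_bound[OF int_n])
  have "(\<integral>\<^sup>+ t. liminf (\<lambda>n. ennreal (h (xs n) u t v)) \<partial>lborel) \<le> liminf (\<lambda>n. ?N (xs n))"
    by (rule nn_integral_liminf) measurable
  also have "\<dots> \<le> ennreal (hbY 0 u v)"
    by (rule Liminf_le) (use bn in auto)
  finally have le: "(\<integral>\<^sup>+ t. liminf (\<lambda>n. ennreal (h (xs n) u t v)) \<partial>lborel) \<le> ennreal (hbY 0 u v)" .
  have "liminf (\<lambda>n. ennreal (h (xs n) u t v)) = ennreal (h x0 u t v)" for t
  proof (rule lim_imp_Liminf)
    show "(\<lambda>n. ennreal (h (xs n) u t v)) \<longlonglongrightarrow> ennreal (h x0 u t v)"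
      by (intro tendsto_ennrealI isCont_tendsto_compose[OF h_cont_x xs_lim])
  qed simp
  with le have "?N x0 \<le> ennreal (hbY 0 u v)" by simp
  thus "integrable lborel (\<lambda>t. h x0 u t v)"
    by (intro integrableI_nonneg) (auto simp: hnn le_less_trans)
qed

lemma AE_good: "AE p in lborel. good (fst p) (snd p)"
proof -
  let ?\<Phi> = "\<lambda>p. (\<integral>\<^sup>+ x. (\<integral>\<^sup>+ y. ennreal (h x (fst p) y (snd p)) \<partial>lborel) \<partial>lborel)"
  have "(\<integral>\<^sup>+ p. ?\<Phi> p \<partial>lborel) = 1"
    using total reorder[OF G_meas] by simp
  moreover have m: "?\<Phi> \<in> borel_measurable lborel"
  proof -
    have "?\<Phi> \<in> borel_measurable (lborel \<Otimes>\<^sub>M lborel)" by measurable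
    thus ?thesis by (simp only: lborel2)
  qed
  ultimately have "AE p in lborel. ?\<Phi> p \<noteq> \<infinity>"
    by (intro nn_integral_PInf_AE) auto
  moreover have "?\<Phi> p \<noteq> \<infinity> \<Longrightarrow> good (fst p) (snd p)" for p
    by (rule fatou_good, rule nn_integral_PInf_AE) (auto simp: top.not_eq_extremum)
  ultimately show ?thesis by (auto elim: AE_mp)
qed

end

context RD begin

lemma HY_prod_meas:
  "(\<lambda>q. int_upto h (fst q) (fst (snd q)) (fst (snd (snd q))) (snd (snd (snd q))))
     \<in> borel_measurable (borel \<Otimes>\<^sub>M (borel \<Otimes>\<^sub>M (borel \<Otimes>\<^sub>M (borel :: real measure))))"
proof -
  let ?N = "borel \<Otimes>\<^sub>M (borel \<Otimes>\<^sub>M (borel \<Otimes>\<^sub>M (borel :: real measure)))"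
  have ms: "(\<lambda>z. snd z) \<in> borel_measurable (?N \<Otimes>\<^sub>M lborel)"
    using measurable_snd[of ?N "lborel :: real measure"] by simp
  have mf: "(\<lambda>z. fst (snd (snd (fst z)))) \<in> borel_measurable (?N \<Otimes>\<^sub>M (lborel :: real measure))"
    by measurable
  note X = borel_measurable_le[OF ms mf]
  have S: "{z. snd z \<le> fst (snd (snd (fst z)))} \<in> sets (?N \<Otimes>\<^sub>M (lborel :: real measure))"
    using X by (simp add: space_pair_measure)
  have eq: "int_upto h x u y v = (\<integral>t. indicator {z. snd z \<le> fst (snd (snd (fst z)))} ((x, u, y, v), t) * h x u t v \<partial>lborel)" for x u y v
    unfolding HY_eq by (intro Bochner_Integration.integral_cong) (auto simp: indicator_def)
  have "(\<lambda>z. indicator {z. snd z \<le> fst (snd (snd (fst z)))} z * h (fst (fst z)) (fst (snd (fst z))) (snd z) (snd (snd (snd (fst z))))) \<in> borel_measurable (?N \<Otimes>\<^sub>M lborel)"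
    using S by measurable
  hence "(\<lambda>q. \<integral>t. indicator {z. snd z \<le> fst (snd (snd (fst z)))} (q, t) * h (fst q) (fst (snd q)) t (snd (snd (snd q))) \<partial>lborel) \<in> borel_measurable ?N"
    by (intro lborel.borel_measurable_lebesgue_integral) (simp add: case_prod_beta')
  thus ?thesis unfolding eq by simp
qed

lemma HY_comp[measurable (raw)]:
  assumes [measurable]: "f1 \<in> borel_measurable M" "f2 \<in> borel_measurable M" "f3 \<in> borel_measurable M" "f4 \<in> borel_measurable M"
  shows "(\<lambda>p. int_upto h (f1 p) (f2 p) (f3 p) (f4 p)) \<in> borel_measurable M"
proof -
  have "(\<lambda>p. (f1 p, f2 p, f3 p, f4 p)) \<in> M \<rightarrow>\<^sub>M (borel \<Otimes>\<^sub>M (borel \<Otimes>\<^sub>M (borel \<Otimes>\<^sub>M borel)))"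
    by measurable
  from measurable_compose[OF this HY_prod_meas] show ?thesis by simp
qed

lemma DH_comp[measurable (raw)]:
  assumes [measurable]: "f1 \<in> borel_measurable M" "f2 \<in> borel_measurable M" "f3 \<in> borel_measurable M" "f4 \<in> borel_measurable M"
  shows "(\<lambda>p. DH (f1 p) (f2 p) (f3 p) (f4 p)) \<in> borel_measurable M"
proof (rule borel_measurable_LIMSEQ_real)
  let ?u = "\<lambda>n p. (int_upto h (f1 p + 1 / Suc n) (f2 p) (f3 p) (f4 p) - int_upto h (f1 p) (f2 p) (f3 p) (f4 p)) / (1 / Suc n)"
  show "?u n \<in> borel_measurable M" for n by measurable
  fix p
  let ?g = "\<lambda>x. int_upto h x (f2 p) (f3 p) (f4 p)"
  have "(?g has_real_derivative DH (f1 p) (f2 p) (f3 p) (f4 p)) (at (f1 p))"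
    using dHx unfolding DH_def by (simp add: DERIV_deriv_iff_real_differentiable)
  hence "((\<lambda>e. (?g (f1 p + e) - ?g (f1 p)) / e) \<longlongrightarrow> DH (f1 p) (f2 p) (f3 p) (f4 p)) (at 0)"
    unfolding DERIV_def .
  moreover have "filterlim (\<lambda>n. 1 / real (Suc n)) (at 0) sequentially"
    unfolding filterlim_at using LIMSEQ_Suc[OF lim_inverse_n'] by auto
  ultimately have "(\<lambda>n. (\<lambda>e. (?g (f1 p + e) - ?g (f1 p)) / e) (1 / real (Suc n))) \<longlonglongrightarrow> DH (f1 p) (f2 p) (f3 p) (f4 p)"
    by (rule filterlim_compose)
  thus "(\<lambda>n. ?u n p) \<longlonglongrightarrow> DH (f1 p) (f2 p) (f3 p) (f4 p)" by simp
qed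

definition F where "F c x y = (\<integral>p. int_upto h (x - c * fst p) (fst p) (y - c * snd p) (snd p) \<partial>lborel)"
definition Fx where "Fx c x y = (\<integral>p. DH (x - c * fst p) (fst p) (y - c * snd p) (snd p) \<partial>lborel)"
definition Fy where "Fy c x y = (\<integral>p. h (x - c * fst p) (fst p) (y - c * snd p) (snd p) \<partial>lborel)"

lemma m2: "f \<in> borel_measurable (borel :: (real \<times> real) measure) \<Longrightarrow> f \<in> borel_measurable lborel"
  by simp

lemma hb_abs: "i \<le> 2 \<Longrightarrow> \<bar>hb i u v\<bar> = hb i u v" "i \<le> 2 \<Longrightarrow> \<bar>hbY i u v\<bar> = hbY i u v"
  using hbnn[of i u v] by auto

lemma hb1_abs: "\<bar>hbY 1 u v\<bar> = hbY 1 u v" by (rule hb_abs) simp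

lemma int_HY: "integrable lborel (\<lambda>p. int_upto h (x - c * fst p) (fst p) (y - c * snd p) (snd p))"
  by (rule Bochner_Integration.integrable_bound[OF hb_int(2)[of 0]])
     (auto intro!: m2 AE_I2 simp: HY_nn HY_le hb_abs)

lemma int_DH: "integrable lborel (\<lambda>p. DH (x - c * fst p) (fst p) (y - c * snd p) (snd p))"
proof -
  have i1: "integrable lborel (\<lambda>p. hbY 1 (fst p) (snd p))" by (rule hb_int) simp
  show ?thesis
  proof (rule Bochner_Integration.integrable_bound[OF i1])
    show "(\<lambda>p. DH (x - c * fst p) (fst p) (y - c * snd p) (snd p)) \<in> borel_measurable lborel"
      by (rule m2) measurable
    show "AE p in lborel. norm (DH (x - c * fst p) (fst p) (y - c * snd p) (snd p)) \<le> norm (hbY 1 (fst p) (snd p))"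
      by (rule AE_I2) (simp only: real_norm_def hb1_abs DH_le)
  qed
qed

lemma int_h: "integrable lborel (\<lambda>p. h (x - c * fst p) (fst p) (y - c * snd p) (snd p))"
  by (rule Bochner_Integration.integrable_bound[OF hb_int(1)[of 0]])
     (auto intro!: m2 AE_I2 simp: hnn h_le hb_abs)

lemma lin_bound:
  fixes A B :: real
  assumes "A \<ge> 0" "B \<ge> 0"
  shows "A * \<bar>x - c * u - (x' - c' * u)\<bar> + B * \<bar>y - c * v - (y' - c' * v)\<bar>
         \<le> (\<bar>x - x'\<bar> + \<bar>y - y'\<bar> + \<bar>c - c'\<bar>) * ((1 + \<bar>u\<bar> + \<bar>v\<bar>) * A + (1 + \<bar>u\<bar> + \<bar>v\<bar>) * B)"
proof -
  define D where "D = \<bar>x - x'\<bar> + \<bar>y - y'\<bar> + \<bar>c - c'\<bar>"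
  have "\<bar>x - c * u - (x' - c' * u)\<bar> \<le> \<bar>x - x'\<bar> + \<bar>c - c'\<bar> * \<bar>u\<bar>"
  proof -
    have e: "x - c * u - (x' - c' * u) = (x - x') - (c - c') * u" by (simp add: algebra_simps)
    have "\<bar>(x - x') - (c - c') * u\<bar> \<le> \<bar>x - x'\<bar> + \<bar>(c - c') * u\<bar>" by (rule abs_triangle_ineq4)
    thus ?thesis unfolding e by (simp add: abs_mult)
  qed
  also have "\<dots> \<le> D * (1 + \<bar>u\<bar> + \<bar>v\<bar>)"
  proof -
    have "\<bar>c - c'\<bar> * \<bar>u\<bar> \<le> D * \<bar>u\<bar>" by (rule mult_right_mono) (auto simp: D_def)
    moreover have "\<bar>x - x'\<bar> \<le> D" "0 \<le> D * \<bar>v\<bar>" by (auto simp: D_def)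
    moreover have "D * (1 + \<bar>u\<bar> + \<bar>v\<bar>) = D + D * \<bar>u\<bar> + D * \<bar>v\<bar>" by (simp add: algebra_simps)
    ultimately show ?thesis by linarith
  qed
  finally have 1: "A * \<bar>x - c * u - (x' - c' * u)\<bar> \<le> A * (D * (1 + \<bar>u\<bar> + \<bar>v\<bar>))"
    using assms(1) by (rule mult_left_mono)
  have "\<bar>y - c * v - (y' - c' * v)\<bar> \<le> \<bar>y - y'\<bar> + \<bar>c - c'\<bar> * \<bar>v\<bar>"
  proof -
    have e: "y - c * v - (y' - c' * v) = (y - y') - (c - c') * v" by (simp add: algebra_simps)
    have "\<bar>(y - y') - (c - c') * v\<bar> \<le> \<bar>y - y'\<bar> + \<bar>(c - c') * v\<bar>" by (rule abs_triangle_ineq4)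
    thus ?thesis unfolding e by (simp add: abs_mult)
  qed
  also have "\<dots> \<le> D * (1 + \<bar>u\<bar> + \<bar>v\<bar>)"
  proof -
    have "\<bar>c - c'\<bar> * \<bar>v\<bar> \<le> D * \<bar>v\<bar>" by (rule mult_right_mono) (auto simp: D_def)
    moreover have "\<bar>y - y'\<bar> \<le> D" "0 \<le> D * \<bar>u\<bar>" by (auto simp: D_def)
    moreover have "D * (1 + \<bar>u\<bar> + \<bar>v\<bar>) = D + D * \<bar>u\<bar> + D * \<bar>v\<bar>" by (simp add: algebra_simps)
    ultimately show ?thesis by linarith
  qed
  finally have 2: "B * \<bar>y - c * v - (y' - c' * v)\<bar> \<le> B * (D * (1 + \<bar>u\<bar> + \<bar>v\<bar>))"
    using assms(2) by (rule mult_left_mono)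
  show ?thesis using 1 2 unfolding D_def[symmetric] by (simp add: algebra_simps)
qed

lemma int_lip:
  fixes g1 g2 :: "real \<times> real \<Rightarrow> real"
  assumes i: "integrable lborel g1" "integrable lborel g2" and ij: "i \<le> 2" "j \<le> 2"
    and b: "AE p in lborel. \<bar>g1 p - g2 p\<bar> \<le> A (fst p) (snd p) * \<bar>x - c * fst p - (x' - c' * fst p)\<bar>
                                    + B (fst p) (snd p) * \<bar>y - c * snd p - (y' - c' * snd p)\<bar>"
    and AB: "A = hb i \<or> A = hbY i" "B = hb j \<or> B = hbY j"
  shows "\<bar>integral\<^sup>L lborel g1 - integral\<^sup>L lborel g2\<bar> \<le> (\<bar>x - x'\<bar> + \<bar>y - y'\<bar> + \<bar>c - c'\<bar>) * (2 * K)"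
proof -
  define D where "D = \<bar>x - x'\<bar> + \<bar>y - y'\<bar> + \<bar>c - c'\<bar>"
  have iA: "integrable lborel (\<lambda>p. wt p * A (fst p) (snd p))" and iB: "integrable lborel (\<lambda>p. wt p * B (fst p) (snd p))"
    using AB mom_int[OF ij(1)] mom_int[OF ij(2)] by auto
  have kA: "(\<integral>p. wt p * A (fst p) (snd p) \<partial>lborel) \<le> K" and kB: "(\<integral>p. wt p * B (fst p) (snd p) \<partial>lborel) \<le> K"
    using AB mom_int[OF ij(1)] mom_int[OF ij(2)] by auto
  have nA: "A u v \<ge> 0" and nB: "B u v \<ge> 0" for u v using AB hbnn[OF ij(1)] hbnn[OF ij(2)] by auto
  have "\<bar>integral\<^sup>L lborel g1 - integral\<^sup>L lborel g2\<bar> \<le> (\<integral>p. D * (wt p * A (fst p) (snd p) + wt p * B (fst p) (snd p)) \<partial>lborel)"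
  proof (rule abs_integral_diff_le[OF i])
    show "integrable lborel (\<lambda>p. D * (wt p * A (fst p) (snd p) + wt p * B (fst p) (snd p)))"
      using iA iB by auto
    show "AE p in lborel. \<bar>g1 p - g2 p\<bar> \<le> D * (wt p * A (fst p) (snd p) + wt p * B (fst p) (snd p))"
      using b
    proof (rule AE_mp, intro AE_I2 impI)
      fix p :: "real \<times> real"
      assume "\<bar>g1 p - g2 p\<bar> \<le> A (fst p) (snd p) * \<bar>x - c * fst p - (x' - c' * fst p)\<bar>
                                    + B (fst p) (snd p) * \<bar>y - c * snd p - (y' - c' * snd p)\<bar>"
      also have "\<dots> \<le> D * (wt p * A (fst p) (snd p) + wt p * B (fst p) (snd p))"
        using lin_bound[where A="A (fst p) (snd p)" and B="B (fst p) (snd p)" and x=x and c=c and u="fst p"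
            and x'=x' and c'=c' and y=y and v="snd p" and y'=y', OF nA nB] unfolding D_def wt_def by (simp add: mult_ac)
      finally show "\<bar>g1 p - g2 p\<bar> \<le> D * (wt p * A (fst p) (snd p) + wt p * B (fst p) (snd p))" .
    qed
  qed
  also have "\<dots> = D * ((\<integral>p. wt p * A (fst p) (snd p) \<partial>lborel) + (\<integral>p. wt p * B (fst p) (snd p) \<partial>lborel))"
    using iA iB by simp
  also have "\<dots> \<le> D * (2 * K)"
    using kA kB by (intro mult_left_mono) (auto simp: D_def)
  finally show ?thesis unfolding D_def .
qed

lemma F_lip: "\<bar>F c x y - F c' x' y'\<bar> \<le> (\<bar>x - x'\<bar> + \<bar>y - y'\<bar> + \<bar>c - c'\<bar>) * (2 * K)"
  unfolding F_def
proof (rule int_lip[OF int_HY int_HY, where i=1 and j=0 and A="hbY 1" and B="hb 0"])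
  show "AE p in lborel. \<bar>int_upto h (x - c * fst p) (fst p) (y - c * snd p) (snd p) -
                         int_upto h (x' - c' * fst p) (fst p) (y' - c' * snd p) (snd p)\<bar>
        \<le> hbY 1 (fst p) (snd p) * \<bar>x - c * fst p - (x' - c' * fst p)\<bar> +
           hb 0 (fst p) (snd p) * \<bar>y - c * snd p - (y' - c' * snd p)\<bar>"
    using AE_good by (rule AE_mp) (rule AE_I2, rule impI, rule HY_lip2, simp)
qed auto

lemma Fx_lip: "\<bar>Fx c x y - Fx c' x' y'\<bar> \<le> (\<bar>x - x'\<bar> + \<bar>y - y'\<bar> + \<bar>c - c'\<bar>) * (2 * K)"
  unfolding Fx_def
proof (rule int_lip[OF int_DH int_DH, where i=2 and j=1 and A="hbY 2" and B="hb 1"])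
  show "AE p in lborel. \<bar>DH (x - c * fst p) (fst p) (y - c * snd p) (snd p) -
                         DH (x' - c' * fst p) (fst p) (y' - c' * snd p) (snd p)\<bar>
        \<le> hbY 2 (fst p) (snd p) * \<bar>x - c * fst p - (x' - c' * fst p)\<bar> +
           hb 1 (fst p) (snd p) * \<bar>y - c * snd p - (y' - c' * snd p)\<bar>"
    using AE_good by (rule AE_mp) (rule AE_I2, rule impI, rule DH_lip2, simp)
qed auto

lemma Fy_lip: "\<bar>Fy c x y - Fy c' x' y'\<bar> \<le> (\<bar>x - x'\<bar> + \<bar>y - y'\<bar> + \<bar>c - c'\<bar>) * (2 * K)"
  unfolding Fy_def
proof (rule int_lip[OF int_h int_h, where i=1 and j=2 and A="hb 1" and B="hb 2"])
  show "AE p in lborel. \<bar>h (x - c * fst p) (fst p) (y - c * snd p) (snd p) -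
                         h (x' - c' * fst p) (fst p) (y' - c' * snd p) (snd p)\<bar>
        \<le> hb 1 (fst p) (snd p) * \<bar>x - c * fst p - (x' - c' * fst p)\<bar> +
           hb 2 (fst p) (snd p) * \<bar>y - c * snd p - (y' - c' * snd p)\<bar>"
    by (rule AE_I2, rule h_lip)
qed auto

end

context RD begin

lemma le_w: "0 \<le> (y::real) \<Longrightarrow> 1 \<le> w \<Longrightarrow> y \<le> w * y"
  using mult_right_mono[of 1 w y] by simp

lemma hb_le_K: "i \<le> 2 \<Longrightarrow> (\<integral>p. hb i (fst p) (snd p) \<partial>lborel) \<le> K"
               "i \<le> 2 \<Longrightarrow> (\<integral>p. hbY i (fst p) (snd p) \<partial>lborel) \<le> K"
proof -
  assume i: "i \<le> 2"
  have "(\<integral>p. hb i (fst p) (snd p) \<partial>lborel) \<le> (\<integral>p. wt p * hb i (fst p) (snd p) \<partial>lborel)"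
    by (intro integral_mono hb_int mom_int i le_w) (use hbnn[OF i] wt_ge1 in auto)
  thus "(\<integral>p. hb i (fst p) (snd p) \<partial>lborel) \<le> K" using mom_int(2)[OF i] by linarith
  have "(\<integral>p. hbY i (fst p) (snd p) \<partial>lborel) \<le> (\<integral>p. wt p * hbY i (fst p) (snd p) \<partial>lborel)"
    by (intro integral_mono hb_int mom_int i le_w) (use hbnn[OF i] wt_ge1 in auto)
  thus "(\<integral>p. hbY i (fst p) (snd p) \<partial>lborel) \<le> K" using mom_int(4)[OF i] by linarith
qed

lemma int_taylor:
  fixes g1 g2 g3 B :: "real \<times> real \<Rightarrow> real"
  assumes i: "integrable lborel g1" "integrable lborel g2" "integrable lborel g3" "integrable lborel B"
    and b: "AE p in lborel. \<bar>g1 p - g2 p - e * g3 p\<bar> \<le> B p * e\<^sup>2" and BK: "integral\<^sup>L lborel B \<le> K"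
  shows "\<bar>integral\<^sup>L lborel g1 - integral\<^sup>L lborel g2 - e * integral\<^sup>L lborel g3\<bar> \<le> K * e\<^sup>2"
proof -
  have "integral\<^sup>L lborel g1 - integral\<^sup>L lborel g2 - e * integral\<^sup>L lborel g3 = (\<integral>p. g1 p - g2 p - e * g3 p \<partial>lborel)"
    using i by simp
  also have "\<bar>\<dots>\<bar> \<le> (\<integral>p. \<bar>g1 p - g2 p - e * g3 p\<bar> \<partial>lborel)" by (rule integral_abs_bound)
  also have "\<dots> \<le> (\<integral>p. B p * e\<^sup>2 \<partial>lborel)"
    using i b by (intro integral_mono_AE) auto
  also have "\<dots> = integral\<^sup>L lborel B * e\<^sup>2" by simp
  also have "\<dots> \<le> K * e\<^sup>2" using BK by (intro mult_right_mono) auto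
  finally show ?thesis .
qed

lemma F_taylor_x: "\<bar>F c (x + e) y - F c x y - e * Fx c x y\<bar> \<le> K * e\<^sup>2"
  unfolding F_def Fx_def
proof (rule int_taylor[OF int_HY int_HY int_DH hb_int(2)[of 2]])
  show "AE p in lborel. \<bar>int_upto h (x + e - c * fst p) (fst p) (y - c * snd p) (snd p) -
          int_upto h (x - c * fst p) (fst p) (y - c * snd p) (snd p) -
          e * DH (x - c * fst p) (fst p) (y - c * snd p) (snd p)\<bar> \<le> hbY 2 (fst p) (snd p) * e\<^sup>2"
  proof (rule AE_I2)
    fix p :: "real \<times> real"
    have eq: "x + e - c * fst p = (x - c * fst p) + e" by simp
    show "\<bar>int_upto h (x + e - c * fst p) (fst p) (y - c * snd p) (snd p) -
          int_upto h (x - c * fst p) (fst p) (y - c * snd p) (snd p) -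
          e * DH (x - c * fst p) (fst p) (y - c * snd p) (snd p)\<bar> \<le> hbY 2 (fst p) (snd p) * e\<^sup>2"
      unfolding eq by (rule HY_taylor)
  qed
qed (use hb_le_K in auto)

lemma F_taylor_y: "\<bar>F c x (y + e) - F c x y - e * Fy c x y\<bar> \<le> K * e\<^sup>2"
  unfolding F_def Fy_def
proof (rule int_taylor[OF int_HY int_HY int_h hb_int(1)[of 2]])
  show "AE p in lborel. \<bar>int_upto h (x - c * fst p) (fst p) (y + e - c * snd p) (snd p) -
          int_upto h (x - c * fst p) (fst p) (y - c * snd p) (snd p) -
          e * h (x - c * fst p) (fst p) (y - c * snd p) (snd p)\<bar> \<le> hb 2 (fst p) (snd p) * e\<^sup>2"
    using AE_good
  proof (rule AE_mp, intro AE_I2 impI)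
    fix p :: "real \<times> real" assume g: "good (fst p) (snd p)"
    have eq: "y + e - c * snd p = (y - c * snd p) + e" by simp
    show "\<bar>int_upto h (x - c * fst p) (fst p) (y + e - c * snd p) (snd p) -
          int_upto h (x - c * fst p) (fst p) (y - c * snd p) (snd p) -
          e * h (x - c * fst p) (fst p) (y - c * snd p) (snd p)\<bar> \<le> hb 2 (fst p) (snd p) * e\<^sup>2"
      unfolding eq by (rule HY_taylor_y[OF g])
  qed
qed (use hb_le_K in auto)

lemma F_mono: "y \<le> y' \<Longrightarrow> F c x y \<le> F c x y'"
  unfolding F_def
  by (intro integral_mono_AE int_HY, rule AE_mp[OF AE_good], intro AE_I2 impI HY_mono) auto

lemma F_bnd: "\<bar>F c x y\<bar> \<le> K"
proof -
  have "\<bar>F c x y\<bar> \<le> (\<integral>p. hbY 0 (fst p) (snd p) \<partial>lborel)"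
    unfolding F_def by (intro integral_abs_bound_integral int_HY hb_int) (auto simp: HY_nn HY_le)
  thus ?thesis using hb_le_K(2)[of 0] by simp
qed

lemma f_conv: "convergent (\<lambda>n. F c x (real n))"
proof (rule Bseq_monoseq_convergent)
  show "Bseq (\<lambda>n. F c x (real n))" using F_bnd by (intro BseqI'[of _ K]) auto
  show "monoseq (\<lambda>n. F c x (real n))" by (rule mono_SucI1) (auto intro!: F_mono)
qed

definition f where "f c x = lim (\<lambda>n. F c x (real n))"
definition fx where "fx c x = lim (\<lambda>n. Fx c x (real n))"

lemma f_lim: "(\<lambda>n. F c x (real n)) \<longlonglongrightarrow> f c x"
  unfolding f_def using f_conv convergent_LIMSEQ_iff by blast

lemma F_taylor_x': "\<bar>F c (x + e) (real n) - F c x (real n) - e * Fx c x (real n)\<bar> \<le> K * e\<^sup>2"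
  by (rule F_taylor_x)

lemma fx_conv: "convergent (\<lambda>n. Fx c x (real n))"
  by (rule lim_taylor[where G="\<lambda>n x. F c x (real n)", OF F_taylor_x' f_conv K_nn])

lemma fx_lim: "(\<lambda>n. Fx c x (real n)) \<longlonglongrightarrow> fx c x"
  unfolding fx_def using fx_conv convergent_LIMSEQ_iff by blast

lemma f_taylor: "\<bar>f c (x + e) - f c x - e * fx c x\<bar> \<le> K * e\<^sup>2"
  unfolding f_def fx_def
  by (rule lim_taylor2[where G="\<lambda>n x. F c x (real n)", OF F_taylor_x' f_conv K_nn])

lemma f_deriv: "(f c has_real_derivative fx c x) (at x)"
  by (rule deriv_from_bound[of _ x _ K]) (use f_taylor in \<open>simp add: mult.commute\<close>)

lemma f_lip: "\<bar>f c x - f c' x'\<bar> \<le> (\<bar>x - x'\<bar> + \<bar>c - c'\<bar>) * (2 * K)"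
proof -
  have "(\<lambda>n. \<bar>F c x (real n) - F c' x' (real n)\<bar>) \<longlonglongrightarrow> \<bar>f c x - f c' x'\<bar>"
    by (intro tendsto_intros f_lim)
  moreover have "\<bar>F c x (real n) - F c' x' (real n)\<bar> \<le> (\<bar>x - x'\<bar> + \<bar>c - c'\<bar>) * (2 * K)" for n
    using F_lip[of c x "real n" c' x' "real n"] by simp
  ultimately show ?thesis by (intro LIMSEQ_le_const2) auto
qed

lemma fx_lip: "\<bar>fx c x - fx c' x'\<bar> \<le> (\<bar>x - x'\<bar> + \<bar>c - c'\<bar>) * (2 * K)"
proof -
  have "(\<lambda>n. \<bar>Fx c x (real n) - Fx c' x' (real n)\<bar>) \<longlonglongrightarrow> \<bar>fx c x - fx c' x'\<bar>"
    by (intro tendsto_intros fx_lim)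
  moreover have "\<bar>Fx c x (real n) - Fx c' x' (real n)\<bar> \<le> (\<bar>x - x'\<bar> + \<bar>c - c'\<bar>) * (2 * K)" for n
    using Fx_lip[of c x "real n" c' x' "real n"] by simp
  ultimately show ?thesis by (intro LIMSEQ_le_const2) auto
qed

lemma F_deriv_x: "((\<lambda>x. F c x y) has_real_derivative Fx c x y) (at x)"
  by (rule deriv_from_bound[of _ x _ K]) (use F_taylor_x in \<open>simp add: mult.commute\<close>)

lemma F_deriv_y: "((\<lambda>y. F c x y) has_real_derivative Fy c x y) (at y)"
  by (rule deriv_from_bound[of _ y _ K]) (use F_taylor_y in \<open>simp add: mult.commute\<close>)

lemma f_nn: "f c x \<ge> 0"
proof -
  have "F c x (real n) \<ge> 0" for n
    unfolding F_def by (intro Bochner_Integration.integral_nonneg HY_nn)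
  thus ?thesis by (intro LIMSEQ_le_const[OF f_lim]) auto
qed

end

lemma sets4: "sets (lborel \<Otimes>\<^sub>M (lborel \<Otimes>\<^sub>M (lborel \<Otimes>\<^sub>M (lborel :: real measure)))) = sets (borel \<Otimes>\<^sub>M (borel \<Otimes>\<^sub>M (borel \<Otimes>\<^sub>M (borel :: real measure))))"
  by (intro sets_pair_measure_cong) simp_all

lemma sets4': "sets (lborel :: (real \<times> real \<times> real \<times> real) measure) = sets (borel \<Otimes>\<^sub>M (borel \<Otimes>\<^sub>M (borel \<Otimes>\<^sub>M (borel :: real measure))))"
  by (simp only: borel_prod sets_lborel)

lemma sets21: "sets ((lborel :: (real \<times> real) measure) \<Otimes>\<^sub>M (lborel :: real measure)) = sets ((borel \<Otimes>\<^sub>M borel) \<Otimes>\<^sub>M (borel :: real measure))"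
  by (intro sets_pair_measure_cong) (simp only: borel_prod sets_lborel)+

context RD begin

lemma HY_cont_x: "continuous_on UNIV (\<lambda>x. int_upto h x u y v)"
  using dHx by (intro continuous_at_imp_continuous_on ballI differentiable_imp_continuous_within) auto

lemma F_cont_x: "continuous_on UNIV (\<lambda>s. F c s y)"
  using F_deriv_x by (intro continuous_at_imp_continuous_on ballI DERIV_isCont) auto

lemma f_cont: "continuous_on UNIV (f c)"
  using f_deriv by (intro continuous_at_imp_continuous_on ballI DERIV_isCont) auto

lemma inner_y:
  assumes g: "good u v"
  shows "(\<integral>\<^sup>+ y0. ennreal (h x0 u y0 v) * indicator {..b} y0 \<partial>lborel) = ennreal (int_upto h x0 u b v)"
proof -
  have "(\<integral>\<^sup>+ y0. ennreal (h x0 u y0 v) * indicator {..b} y0 \<partial>lborel) = (\<integral>\<^sup>+ y0. ennreal (indicator {..b} y0 * h x0 u y0 v) \<partial>lborel)"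
    by (intro nn_integral_cong) (auto simp: indicator_def)
  also have "\<dots> = ennreal (int_upto h x0 u b v)"
    unfolding HY_eq by (rule nn_integral_eq_integral) (auto intro!: h_int_ind g simp: hnn)
  finally show ?thesis .
qed

lemma inner_xy:
  assumes g: "good u v"
  shows "(\<integral>\<^sup>+ x0. (\<integral>\<^sup>+ y0. ennreal (h x0 u y0 v) *
            indicator {q. fst (snd (snd q)) + c * snd (snd (snd q)) \<le> y \<and> \<bar>fst q + c * fst (snd q) - x\<bar> \<le> d} (x0, u, y0, v) \<partial>lborel) \<partial>lborel)
       = (\<integral>\<^sup>+ s. ennreal (indicator {x - d..x + d} s * int_upto h (s - c * u) u (y - c * v) v) \<partial>lborel)"
proof -
  have "(\<integral>\<^sup>+ x0. (\<integral>\<^sup>+ y0. ennreal (h x0 u y0 v) *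
            indicator {q. fst (snd (snd q)) + c * snd (snd (snd q)) \<le> y \<and> \<bar>fst q + c * fst (snd q) - x\<bar> \<le> d} (x0, u, y0, v) \<partial>lborel) \<partial>lborel)
      = (\<integral>\<^sup>+ x0. indicator {x0. \<bar>x0 + c * u - x\<bar> \<le> d} x0 * (\<integral>\<^sup>+ y0. ennreal (h x0 u y0 v) * indicator {..y - c * v} y0 \<partial>lborel) \<partial>lborel)"
    by (intro nn_integral_cong) (auto simp: indicator_def le_diff_eq)
  also have "\<dots> = (\<integral>\<^sup>+ x0. indicator {x0. \<bar>x0 + c * u - x\<bar> \<le> d} x0 * ennreal (int_upto h x0 u (y - c * v) v) \<partial>lborel)"
    by (simp add: inner_y[OF g])
  also have "\<dots> = (\<integral>\<^sup>+ s. indicator {x0. \<bar>x0 + c * u - x\<bar> \<le> d} (- (c * u) + 1 * s) * ennreal (int_upto h (- (c * u) + 1 * s) u (y - c * v) v) \<partial>lborel)"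
  proof (subst nn_integral_real_affine[where c=1 and t="- (c * u)"])
    have [measurable]: "{x0. \<bar>x0 + c * u - x\<bar> \<le> d} \<in> sets borel" by measurable
    show "(\<lambda>x0. indicator {x0. \<bar>x0 + c * u - x\<bar> \<le> d} x0 * ennreal (int_upto h x0 u (y - c * v) v)) \<in> borel_measurable borel"
      by measurable
  qed simp_all
  also have "\<dots> = (\<integral>\<^sup>+ s. ennreal (indicator {x - d..x + d} s * int_upto h (s - c * u) u (y - c * v) v) \<partial>lborel)"
    by (intro nn_integral_cong) (auto simp: indicator_def abs_le_iff algebra_simps)
  finally show ?thesis .
qed

lemma window:
  "emeasure P {z \<in> space P. fst (snd (snd (X z))) + c * snd (snd (snd (X z))) \<le> y \<and> \<bar>fst (X z) + c * fst (snd (X z)) - x\<bar> \<le> d}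
     = (\<integral>\<^sup>+ s. ennreal (indicator {x - d..x + d} s * F c s y) \<partial>lborel)"
proof -
  define S where "S = {q :: real \<times> real \<times> real \<times> real. fst (snd (snd q)) + c * snd (snd (snd q)) \<le> y \<and> \<bar>fst q + c * fst (snd q) - x\<bar> \<le> d}"
  have Sb[measurable]: "S \<in> sets (borel \<Otimes>\<^sub>M (borel \<Otimes>\<^sub>M (borel \<Otimes>\<^sub>M (borel :: real measure))))"
  proof -
    have "Measurable.pred (borel \<Otimes>\<^sub>M (borel \<Otimes>\<^sub>M (borel \<Otimes>\<^sub>M (borel :: real measure))))
            (\<lambda>q. fst (snd (snd q)) + c * snd (snd (snd q)) \<le> y \<and> \<bar>fst q + c * fst (snd q) - x\<bar> \<le> d)"
      by measurable
    thus ?thesis unfolding S_def pred_def by (simp add: space_pair_measure)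
  qed
  have Sl: "S \<in> sets lborel" using Sb sets4' by simp
  have "emeasure P {z \<in> space P. fst (snd (snd (X z))) + c * snd (snd (snd (X z))) \<le> y \<and> \<bar>fst (X z) + c * fst (snd (X z)) - x\<bar> \<le> d}
        = emeasure P (X -` S \<inter> space P)"
    by (rule arg_cong[where f="emeasure P"]) (auto simp: S_def)
  also have "\<dots> = (\<integral>\<^sup>+ q. (\<lambda>(x, u, y, v). ennreal (h x u y v)) q * indicator S q \<partial>lborel)"
    by (rule distributed_emeasure[OF distr Sl])
  also have "\<dots> = (\<integral>\<^sup>+ q. ennreal (h (fst q) (fst (snd q)) (fst (snd (snd q))) (snd (snd (snd q)))) * indicator S q \<partial>lborel)"
    by (simp add: case_prod_beta')
  also have "\<dots> = (\<integral>\<^sup>+ p. (\<integral>\<^sup>+ x0. (\<integral>\<^sup>+ y0. ennreal (h x0 (fst p) y0 (snd p)) * indicator S (x0, fst p, y0, snd p) \<partial>lborel) \<partial>lborel) \<partial>lborel)"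
  proof -
    have "(\<lambda>q. ennreal (h (fst q) (fst (snd q)) (fst (snd (snd q))) (snd (snd (snd q)))) * indicator S q)
            \<in> borel_measurable (borel \<Otimes>\<^sub>M (borel \<Otimes>\<^sub>M (borel \<Otimes>\<^sub>M (borel :: real measure))))"
      by measurable
    hence m: "(\<lambda>q. ennreal (h (fst q) (fst (snd q)) (fst (snd (snd q))) (snd (snd (snd q)))) * indicator S q)
            \<in> borel_measurable (lborel \<Otimes>\<^sub>M (lborel \<Otimes>\<^sub>M (lborel \<Otimes>\<^sub>M lborel)))"
      by (subst measurable_cong_sets[OF sets4 refl])
    show ?thesis using reorder[OF m] by simp
  qed
  also have "\<dots> = (\<integral>\<^sup>+ p. (\<integral>\<^sup>+ s. ennreal (indicator {x - d..x + d} s * int_upto h (s - c * fst p) (fst p) (y - c * snd p) (snd p)) \<partial>lborel) \<partial>lborel)"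
    unfolding S_def
    by (rule nn_integral_cong_AE, rule AE_mp[OF AE_good], intro AE_I2 impI inner_xy) simp
  also have "\<dots> = (\<integral>\<^sup>+ s. (\<integral>\<^sup>+ p. ennreal (indicator {x - d..x + d} s * int_upto h (s - c * fst p) (fst p) (y - c * snd p) (snd p)) \<partial>lborel) \<partial>lborel)"
  proof (rule lborel_pair.Fubini'[symmetric])
    have "(\<lambda>(p, s). ennreal (indicator {x - d..x + d} s * int_upto h (s - c * fst p) (fst p) (y - c * snd p) (snd p)))
           \<in> borel_measurable ((borel \<Otimes>\<^sub>M borel) \<Otimes>\<^sub>M (borel :: real measure))"
      by measurable
    thus "(\<lambda>(p, s). ennreal (indicator {x - d..x + d} s * int_upto h (s - c * fst p) (fst p) (y - c * snd p) (snd p)))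
           \<in> borel_measurable ((lborel :: (real \<times> real) measure) \<Otimes>\<^sub>M lborel)"
      by (subst measurable_cong_sets[OF sets21 refl])
  qed
  also have "\<dots> = (\<integral>\<^sup>+ s. ennreal (indicator {x - d..x + d} s * F c s y) \<partial>lborel)"
  proof (rule nn_integral_cong)
    fix s :: real
    have "(\<integral>\<^sup>+ p. ennreal (indicator {x - d..x + d} s * int_upto h (s - c * fst p) (fst p) (y - c * snd p) (snd p)) \<partial>lborel)
          = (\<integral>p. indicator {x - d..x + d} s * int_upto h (s - c * fst p) (fst p) (y - c * snd p) (snd p) \<partial>lborel)"
      by (rule nn_integral_eq_integral) (auto intro!: int_HY simp: HY_nn)
    also have "\<dots> = indicator {x - d..x + d} s * F c s y" unfolding F_def by simp
    finally show "(\<integral>\<^sup>+ p. ennreal (indicator {x - d..x + d} s * int_upto h (s - c * fst p) (fst p) (y - c * snd p) (snd p)) \<partial>lborel)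
          = ennreal (indicator {x - d..x + d} s * F c s y)" .
  qed
  finally show ?thesis .
qed

end

lemma int_Icc_ind: "integrable lborel (indicator {a..b} :: real \<Rightarrow> real)"
  by (intro integrable_real_indicator) (auto simp: emeasure_lborel_Icc_eq)

lemma div2_eq: "(d::real) > 0 \<Longrightarrow> (a / (2 * d)) / (b / (2 * d)) = a / b"
  by (cases "b = 0") (simp_all add: field_simps)

lemma avg_tendsto:
  fixes g :: "real \<Rightarrow> real"
  assumes c: "continuous_on UNIV g" and L: "\<And>s. \<bar>g s - g x\<bar> \<le> L * \<bar>s - x\<bar>"
  shows "((\<lambda>d. (\<integral>s. indicator {x - d..x + d} s * g s \<partial>lborel) / (2 * d)) \<longlongrightarrow> g x) (at_right 0)"
proof -
  have int: "integrable lborel (\<lambda>s. indicator {x - d..x + d} s * g s)" for d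
    using borel_integrable_compact[of "{x - d..x + d}" g] c by (auto intro: continuous_on_subset)
  have key: "\<bar>(\<integral>s. indicator {x - d..x + d} s * g s \<partial>lborel) / (2 * d) - g x\<bar> \<le> L * d" if d: "d > 0" for d
  proof -
    have i1: "integrable lborel (\<lambda>s. indicator {x - d..x + d} s * g x)"
      using integrable_indicator[of "{x - d..x + d}" lborel "g x"] int_Icc_ind by simp
    have m: "(\<integral>s. indicator {x - d..x + d} s * g x \<partial>lborel) = 2 * d * g x"
      using d int_Icc_ind by simp
    have "\<bar>(\<integral>s. indicator {x - d..x + d} s * g s \<partial>lborel) - (\<integral>s. indicator {x - d..x + d} s * g x \<partial>lborel)\<bar>
          \<le> (\<integral>s. indicator {x - d..x + d} s * (L * d) \<partial>lborel)"
    proof (rule abs_integral_diff_le[OF int i1])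
      show "integrable lborel (\<lambda>s. indicator {x - d..x + d} s * (L * d))"
        using integrable_indicator[of "{x - d..x + d}" lborel "L * d"] int_Icc_ind by simp
      show "AE s in lborel. \<bar>indicator {x - d..x + d} s * g s - indicator {x - d..x + d} s * g x\<bar> \<le> indicator {x - d..x + d} s * (L * d)"
      proof (rule AE_I2)
        fix s
        show "\<bar>indicator {x - d..x + d} s * g s - indicator {x - d..x + d} s * g x\<bar> \<le> indicator {x - d..x + d} s * (L * d)"
        proof (cases "s \<in> {x - d..x + d}")
          case True
          hence "\<bar>s - x\<bar> \<le> d" by auto
          moreover have "L \<ge> 0" using L[of "x + 1"] by simp
          ultimately have "L * \<bar>s - x\<bar> \<le> L * d" by (intro mult_left_mono)
          thus ?thesis using True L[of s] by simp
        qed simp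
      qed
    qed
    also have "(\<integral>s. indicator {x - d..x + d} s * (L * d) \<partial>lborel) = 2 * d * (L * d)" using d int_Icc_ind by simp
    finally have "\<bar>(\<integral>s. indicator {x - d..x + d} s * g s \<partial>lborel) - 2 * d * g x\<bar> \<le> 2 * d * (L * d)"
      unfolding m .
    moreover have "(\<integral>s. indicator {x - d..x + d} s * g s \<partial>lborel) / (2 * d) - g x
                   = ((\<integral>s. indicator {x - d..x + d} s * g s \<partial>lborel) - 2 * d * g x) / (2 * d)"
      using d by (simp add: field_simps)
    ultimately show ?thesis using d by (simp add: abs_divide divide_le_eq mult_ac)
  qed
  have "((\<lambda>d. (\<integral>s. indicator {x - d..x + d} s * g s \<partial>lborel) / (2 * d) - g x) \<longlongrightarrow> 0) (at_right 0)"
  proof (rule Lim_null_comparison)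
    show "\<forall>\<^sub>F d in at_right 0. norm ((\<integral>s. indicator {x - d..x + d} s * g s \<partial>lborel) / (2 * d) - g x) \<le> L * d"
      using eventually_at_right_less[of 0] by eventually_elim (use key in auto)
    show "((\<lambda>d. L * d) \<longlongrightarrow> 0) (at_right 0)"
      by (rule tendsto_eq_intros tendsto_ident_at | simp)+
  qed
  thus ?thesis by (simp add: LIM_zero_iff)
qed

context RD begin

lemma Xm: "X \<in> measurable P (borel \<Otimes>\<^sub>M (borel \<Otimes>\<^sub>M (borel \<Otimes>\<^sub>M (borel :: real measure))))"
  using distributed_measurable[OF distr] measurable_cong_sets[OF refl sets4'] by blast

lemma window_all:
  "emeasure P {z \<in> space P. \<bar>fst (X z) + c * fst (snd (X z)) - x\<bar> \<le> d}
     = (\<integral>\<^sup>+ s. ennreal (indicator {x - d..x + d} s * f c s) \<partial>lborel)"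
proof -
  note Xm[measurable]
  define E where "E n = {z \<in> space P. fst (snd (snd (X z))) + c * snd (snd (snd (X z))) \<le> real n \<and> \<bar>fst (X z) + c * fst (snd (X z)) - x\<bar> \<le> d}" for n
  have "E n \<in> sets P" for n unfolding E_def by measurable
  hence "range E \<subseteq> sets P" by auto
  moreover have "incseq E" unfolding E_def incseq_def by (auto intro: order_trans)
  ultimately have l1: "(\<lambda>n. emeasure P (E n)) \<longlonglongrightarrow> emeasure P (\<Union> (range E))"
    by (rule Lim_emeasure_incseq)
  have U: "\<Union> (range E) = {z \<in> space P. \<bar>fst (X z) + c * fst (snd (X z)) - x\<bar> \<le> d}"
  proof safe
    fix z assume z: "z \<in> space P" "\<bar>fst (X z) + c * fst (snd (X z)) - x\<bar> \<le> d"
    obtain n :: nat where "fst (snd (snd (X z))) + c * snd (snd (snd (X z))) \<le> real n"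
      using real_arch_simple by blast
    thus "z \<in> \<Union> (range E)" using z unfolding E_def by auto
  qed (auto simp: E_def)
  have l2: "(\<lambda>n. emeasure P (E n)) \<longlonglongrightarrow> (\<integral>\<^sup>+ s. ennreal (indicator {x - d..x + d} s * f c s) \<partial>lborel)"
    unfolding E_def window
  proof (rule nn_integral_LIMSEQ)
    show "incseq (\<lambda>n s. ennreal (indicator {x - d..x + d} s * F c s (real n)))"
      by (auto simp: incseq_def le_fun_def intro!: ennreal_leI mult_left_mono F_mono)
    have "(\<lambda>s. F c s (real n)) \<in> borel_measurable borel" for n
      by (rule borel_measurable_continuous_onI[OF F_cont_x])
    thus "\<And>n. (\<lambda>s. ennreal (indicator {x - d..x + d} s * F c s (real n))) \<in> borel_measurable lborel"
      by measurable
    fix s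
    show "(\<lambda>n. ennreal (indicator {x - d..x + d} s * F c s (real n))) \<longlonglongrightarrow> ennreal (indicator {x - d..x + d} s * f c s)"
      by (intro tendsto_ennrealI tendsto_mult_left f_lim)
  qed
  from LIMSEQ_unique[OF l1 l2] U show ?thesis by simp
qed

lemma meas_window:
  "measure P {z \<in> space P. fst (snd (snd (X z))) + c * snd (snd (snd (X z))) \<le> y \<and> \<bar>fst (X z) + c * fst (snd (X z)) - x\<bar> \<le> d}
     = (\<integral>s. indicator {x - d..x + d} s * F c s y \<partial>lborel)"
proof -
  have int: "integrable lborel (\<lambda>s. indicator {x - d..x + d} s * F c s y)"
    using borel_integrable_compact[of "{x - d..x + d}" "\<lambda>s. F c s y"] F_cont_x by (auto intro: continuous_on_subset)
  have nn: "0 \<le> F c s y" for s unfolding F_def by (intro Bochner_Integration.integral_nonneg HY_nn)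
  have "(\<integral>\<^sup>+ s. ennreal (indicator {x - d..x + d} s * F c s y) \<partial>lborel) = ennreal (\<integral>s. indicator {x - d..x + d} s * F c s y \<partial>lborel)"
    by (rule nn_integral_eq_integral[OF int]) (auto simp: nn)
  moreover have "(\<integral>s. indicator {x - d..x + d} s * F c s y \<partial>lborel) \<ge> 0"
    by (intro Bochner_Integration.integral_nonneg) (auto simp: nn)
  ultimately show ?thesis unfolding measure_def window by simp
qed

lemma meas_window_all:
  "measure P {z \<in> space P. \<bar>fst (X z) + c * fst (snd (X z)) - x\<bar> \<le> d}
     = (\<integral>s. indicator {x - d..x + d} s * f c s \<partial>lborel)"
proof -
  have int: "integrable lborel (\<lambda>s. indicator {x - d..x + d} s * f c s)"
    using borel_integrable_compact[of "{x - d..x + d}" "f c"] f_cont by (auto intro: continuous_on_subset)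
  have "(\<integral>\<^sup>+ s. ennreal (indicator {x - d..x + d} s * f c s) \<partial>lborel) = ennreal (\<integral>s. indicator {x - d..x + d} s * f c s \<partial>lborel)"
    by (rule nn_integral_eq_integral[OF int]) (auto simp: f_nn)
  moreover have "(\<integral>s. indicator {x - d..x + d} s * f c s \<partial>lborel) \<ge> 0"
    by (intro Bochner_Integration.integral_nonneg) (auto simp: f_nn)
  ultimately show ?thesis unfolding measure_def window_all by simp
qed

lemma F_lip_x: "\<bar>F c s y - F c x y\<bar> \<le> (2 * K) * \<bar>s - x\<bar>"
  using F_lip[of c s y c x y] by (simp add: mult_ac)

lemma f_lip_x: "\<bar>f c s - f c x\<bar> \<le> (2 * K) * \<bar>s - x\<bar>"
  using f_lip[of c s c x] by (simp add: mult_ac)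

lemma lim_num:
  "((\<lambda>d. measure P {z \<in> space P. fst (snd (snd (X z))) + c * snd (snd (snd (X z))) \<le> y \<and> \<bar>fst (X z) + c * fst (snd (X z)) - x\<bar> \<le> d} / (2 * d))
     \<longlongrightarrow> F c x y) (at_right 0)"
  unfolding meas_window by (rule avg_tendsto[OF F_cont_x F_lip_x])

lemma lim_den:
  "((\<lambda>d. measure P {z \<in> space P. \<bar>fst (X z) + c * fst (snd (X z)) - x\<bar> \<le> d} / (2 * d)) \<longlongrightarrow> f c x) (at_right 0)"
  unfolding meas_window_all by (rule avg_tendsto[OF f_cont f_lip_x])

lemma pt_density_eq: "pt_density P (\<lambda>z. fst (X z) + c * fst (snd (X z))) x = f c x"
  unfolding pt_density_def using lim_den by (intro tendsto_Lim) auto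

lemma cond_cdf_eq:
  assumes "f c x \<noteq> 0"
  shows "cond_cdf P (\<lambda>z. fst (X z) + c * fst (snd (X z))) (\<lambda>z. fst (snd (snd (X z))) + c * snd (snd (snd (X z)))) x y = F c x y / f c x"
  unfolding cond_cdf_def
proof (intro tendsto_Lim)
  let ?A = "\<lambda>d. measure P {z \<in> space P. fst (snd (snd (X z))) + c * snd (snd (snd (X z))) \<le> y \<and> \<bar>fst (X z) + c * fst (snd (X z)) - x\<bar> \<le> d}"
  let ?B = "\<lambda>d. measure P {z \<in> space P. \<bar>fst (X z) + c * fst (snd (X z)) - x\<bar> \<le> d}"
  have "((\<lambda>d. (?A d / (2 * d)) / (?B d / (2 * d))) \<longlongrightarrow> F c x y / f c x) (at_right 0)"
    by (rule tendsto_divide[OF lim_num lim_den assms])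
  moreover have "\<forall>\<^sub>F d in at_right 0. (?A d / (2 * d)) / (?B d / (2 * d)) = ?A d / ?B d"
    using eventually_at_right_less[of 0] by eventually_elim (rule div2_eq)
  ultimately show "((\<lambda>d. ?A d / ?B d) \<longlongrightarrow> F c x y / f c x) (at_right 0)"
    by (rule Lim_transform_eventually)
qed simp

end

context RD begin

lemma dx_cond:
  assumes nz: "f c x \<noteq> 0"
  shows "deriv (\<lambda>x'. cond_cdf P (\<lambda>z. fst (X z) + c * fst (snd (X z))) (\<lambda>z. fst (snd (snd (X z))) + c * snd (snd (snd (X z)))) x' y) x
         = (Fx c x y * f c x - F c x y * fx c x) / (f c x * f c x)"
proof -
  have D: "((\<lambda>s. F c s y / f c s) has_real_derivative (Fx c x y * f c x - F c x y * fx c x) / (f c x * f c x)) (at x)"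
    by (rule DERIV_divide[OF F_deriv_x f_deriv nz])
  have op: "open {s. f c s \<noteq> 0}"
    using f_cont by (intro open_Collect_neq) (auto intro: continuous_intros)
  have "((\<lambda>x'. cond_cdf P (\<lambda>z. fst (X z) + c * fst (snd (X z))) (\<lambda>z. fst (snd (snd (X z))) + c * snd (snd (snd (X z)))) x' y)
          has_real_derivative (Fx c x y * f c x - F c x y * fx c x) / (f c x * f c x)) (at x)"
    by (rule has_field_derivative_transform_within_open[OF D op]) (use nz cond_cdf_eq in auto)
  thus ?thesis by (rule DERIV_imp_deriv)
qed

lemma dy_cond:
  assumes nz: "f c x \<noteq> 0"
  shows "deriv (\<lambda>y'. cond_cdf P (\<lambda>z. fst (X z) + c * fst (snd (X z))) (\<lambda>z. fst (snd (snd (X z))) + c * snd (snd (snd (X z)))) x y') y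
         = Fy c x y / f c x"
proof -
  have e: "(\<lambda>y'. cond_cdf P (\<lambda>z. fst (X z) + c * fst (snd (X z))) (\<lambda>z. fst (snd (snd (X z))) + c * snd (snd (snd (X z)))) x y')
          = (\<lambda>y'. F c x y' / f c x)"
    using cond_cdf_eq[OF nz] by auto
  have "((\<lambda>y'. F c x y' / f c x) has_real_derivative Fy c x y / f c x) (at y)"
    by (rule DERIV_cdivide[OF F_deriv_y])
  thus ?thesis unfolding e by (rule DERIV_imp_deriv)
qed

lemma F_eq_Lim:
  "F c x y = Lim (at_right 0) (\<lambda>d. measure P {z \<in> space P. fst (snd (snd (X z))) + c * snd (snd (snd (X z))) \<le> y \<and> \<bar>fst (X z) + c * fst (snd (X z)) - x\<bar> \<le> d} / (2 * d))"
  by (rule tendsto_Lim[symmetric]) (simp_all add: lim_num)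

end

lemma seq_close:
  fixes W :: "nat \<Rightarrow> real"
  assumes "\<And>m. m \<ge> N \<Longrightarrow> \<bar>W m - V\<bar> \<le> e m * C" "e \<longlonglongrightarrow> 0"
  shows "W \<longlonglongrightarrow> V"
proof -
  have "(\<lambda>m. W m - V) \<longlonglongrightarrow> 0"
  proof (rule Lim_null_comparison)
    show "\<forall>\<^sub>F m in sequentially. norm (W m - V) \<le> e m * C"
      using assms(1) by (auto simp: eventually_sequentially)
    show "(\<lambda>m. e m * C) \<longlonglongrightarrow> 0" using tendsto_mult[OF assms(2) tendsto_const[of C]] by simp
  qed
  thus ?thesis by (simp add: LIM_zero_iff)
qed

theorem lemma3:
  fixes P :: "(real ^ 'd) measure"
    and M :: "'w measure"
    and mu pi :: "real ^ 'd \<Rightarrow> real"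
    and mt pt :: "nat \<Rightarrow> 'w \<Rightarrow> real ^ 'd \<Rightarrow> real"
    and a :: "nat \<Rightarrow> real"
    and h :: "nat \<Rightarrow> 'w \<Rightarrow> real \<Rightarrow> real \<Rightarrow> real \<Rightarrow> real \<Rightarrow> real"
  assumes P: "prob_space P"
    and M: "prob_space M"
    and mu_meas: "mu \<in> borel_measurable P"
    and pi_meas: "pi \<in> borel_measurable P"
    and fit_meas: "\<And>m w. w \<in> space M \<Longrightarrow> mt m w \<in> borel_measurable P \<and> pt m w \<in> borel_measurable P"
    and a_pos: "\<And>m. a m > 0"
    and a_lim: "a \<longlonglongrightarrow> 0"
    \<comment> \<open>Assumption (A): stochastic boundedness O_P(a_m) of the sup-norm errors (over the fitting randomness)\<close>
    and A_mu: "\<And>e. e > 0 \<Longrightarrow> \<exists>C N. \<forall>m\<ge>N. \<exists>B\<in>sets M. prob_space.prob M B \<ge> 1 - e \<and>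
                 (\<forall>w\<in>B. ess_norm P (\<lambda>z. mt m w z - mu z) \<le> ereal (C * a m))"
    and A_pi: "\<And>e. e > 0 \<Longrightarrow> \<exists>C N. \<forall>m\<ge>N. \<exists>B\<in>sets M. prob_space.prob M B \<ge> 1 - e \<and>
                 (\<forall>w\<in>B. ess_norm P (\<lambda>z. pt m w z - pi z) \<le> ereal (C * a m))"
    \<comment> \<open>density hypotheses, conditionally on the fitted functions (i.e. for every realisation w)\<close>
    and dens: "\<And>w. w \<in> space M \<Longrightarrow> \<exists>N. \<forall>m\<ge>N.
         (\<forall>x u y v. h m w x u y v \<ge> 0)
       \<and> distributed P (lborel :: (real \<times> real \<times> real \<times> real) measure)
           (\<lambda>z. (mu z, (mt m w z - mu z) / a m, pi z, (pt m w z - pi z) / a m))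
           (\<lambda>(x, u, y, v). ennreal (h m w x u y v))
       \<and> (\<forall>x u y v. (\<lambda>x'. h m w x' u y v) differentiable (at x))
       \<and> (\<forall>x u y v. (\<lambda>y'. h m w x u y' v) differentiable (at y))
       \<and> (\<forall>x u y v. (\<lambda>x'. int_upto (h m w) x' u y v) differentiable (at x))
       \<and> (\<forall>x u y v. (\<lambda>x'. deriv (\<lambda>x''. int_upto (h m w) x'' u y v) x') differentiable (at x))"
    and bounds: "\<And>w. w \<in> space M \<Longrightarrow> \<exists>N (hb :: nat \<Rightarrow> nat \<Rightarrow> real \<Rightarrow> real \<Rightarrow> real) (hbY :: nat \<Rightarrow> nat \<Rightarrow> real \<Rightarrow> real \<Rightarrow> real). \<exists>K::real.
         (\<forall>m\<ge>N.
            (\<forall>i\<le>2. \<forall>u v. hb m i u v \<ge> 0 \<and> hbY m i u v \<ge> 0)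
          \<and> (\<forall>i\<le>2. (\<lambda>(u, v). hb m i u v) \<in> borel_measurable lborel
                   \<and> (\<lambda>(u, v). hbY m i u v) \<in> borel_measurable lborel)
          \<and> (\<forall>x u y v.
               h m w x u y v \<le> hb m 0 u v
             \<and> \<bar>deriv (\<lambda>x'. h m w x' u y v) x\<bar> \<le> hb m 1 u v
             \<and> \<bar>deriv (\<lambda>y'. h m w x u y' v) y\<bar> \<le> hb m 2 u v
             \<and> int_upto (h m w) x u y v \<le> hbY m 0 u v
             \<and> \<bar>deriv (\<lambda>x'. int_upto (h m w) x' u y v) x\<bar> \<le> hbY m 1 u v
             \<and> \<bar>deriv (\<lambda>x'. deriv (\<lambda>x''. int_upto (h m w) x'' u y v) x') x\<bar> \<le> hbY m 2 u v)
          \<and> (\<forall>i\<le>2. \<forall>r::nat\<in>{1,2}.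
               (\<integral>\<^sup>+ (u, v). ennreal ((1 + \<bar>u\<bar> + \<bar>v\<bar>) ^ r * hb m i u v)
                   \<partial>(lborel :: (real \<times> real) measure)) \<le> ennreal K
             \<and> (\<integral>\<^sup>+ (u, v). ennreal ((1 + \<bar>u\<bar> + \<bar>v\<bar>) ^ r * hbY m i u v)
                   \<partial>(lborel :: (real \<times> real) measure)) \<le> ennreal K))"
  shows "\<forall>w\<in>space M. \<forall>(xs :: nat \<Rightarrow> real) (ys :: nat \<Rightarrow> real) x y.
           (\<lambda>m. (xs m, ys m)) \<longlonglongrightarrow> (x, y) \<longrightarrow> pt_density P mu x \<noteq> 0 \<longrightarrow>
             (\<lambda>m. deriv (\<lambda>x'. cond_cdf P (mt m w) (pt m w) x' (ys m)) (xs m))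
                \<longlonglongrightarrow> deriv (\<lambda>x'. cond_cdf P mu pi x' y) x
           \<and> (\<lambda>m. deriv (\<lambda>y'. cond_cdf P (mt m w) (pt m w) (xs m) y') (ys m))
                \<longlonglongrightarrow> deriv (\<lambda>y'. cond_cdf P mu pi x y') y"
proof (intro ballI allI impI)
  fix w and xs ys :: "nat \<Rightarrow> real" and x y :: real
  assume w: "w \<in> space M" and conv: "(\<lambda>m. (xs m, ys m)) \<longlonglongrightarrow> (x, y)" and nz: "pt_density P mu x \<noteq> 0"
  from dens[OF w] obtain N1 where N1: "\<forall>m\<ge>N1.
         (\<forall>x u y v. h m w x u y v \<ge> 0)
       \<and> distributed P (lborel :: (real \<times> real \<times> real \<times> real) measure)
           (\<lambda>z. (mu z, (mt m w z - mu z) / a m, pi z, (pt m w z - pi z) / a m))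
           (\<lambda>(x, u, y, v). ennreal (h m w x u y v))
       \<and> (\<forall>x u y v. (\<lambda>x'. h m w x' u y v) differentiable (at x))
       \<and> (\<forall>x u y v. (\<lambda>y'. h m w x u y' v) differentiable (at y))
       \<and> (\<forall>x u y v. (\<lambda>x'. int_upto (h m w) x' u y v) differentiable (at x))
       \<and> (\<forall>x u y v. (\<lambda>x'. deriv (\<lambda>x''. int_upto (h m w) x'' u y v) x') differentiable (at x))"
    by (rule exE)
  from bounds[OF w] obtain N2 and hb :: "nat \<Rightarrow> nat \<Rightarrow> real \<Rightarrow> real \<Rightarrow> real" and hbY :: "nat \<Rightarrow> nat \<Rightarrow> real \<Rightarrow> real \<Rightarrow> real" and K :: real
    where N2: "\<forall>m\<ge>N2.
            (\<forall>i\<le>2. \<forall>u v. hb m i u v \<ge> 0 \<and> hbY m i u v \<ge> 0)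
          \<and> (\<forall>i\<le>2. (\<lambda>(u, v). hb m i u v) \<in> borel_measurable lborel
                   \<and> (\<lambda>(u, v). hbY m i u v) \<in> borel_measurable lborel)
          \<and> (\<forall>x u y v.
               h m w x u y v \<le> hb m 0 u v
             \<and> \<bar>deriv (\<lambda>x'. h m w x' u y v) x\<bar> \<le> hb m 1 u v
             \<and> \<bar>deriv (\<lambda>y'. h m w x u y' v) y\<bar> \<le> hb m 2 u v
             \<and> int_upto (h m w) x u y v \<le> hbY m 0 u v
             \<and> \<bar>deriv (\<lambda>x'. int_upto (h m w) x' u y v) x\<bar> \<le> hbY m 1 u v
             \<and> \<bar>deriv (\<lambda>x'. deriv (\<lambda>x''. int_upto (h m w) x'' u y v) x') x\<bar> \<le> hbY m 2 u v)
          \<and> (\<forall>i\<le>2. \<forall>r::nat\<in>{1,2}.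
               (\<integral>\<^sup>+ (u, v). ennreal ((1 + \<bar>u\<bar> + \<bar>v\<bar>) ^ r * hb m i u v)
                   \<partial>(lborel :: (real \<times> real) measure)) \<le> ennreal K
             \<and> (\<integral>\<^sup>+ (u, v). ennreal ((1 + \<bar>u\<bar> + \<bar>v\<bar>) ^ r * hbY m i u v)
                   \<partial>(lborel :: (real \<times> real) measure)) \<le> ennreal K)"
    by blast
  define N where "N = max N1 N2"
  define K' where "K' = max K 0"
  define Xm where "Xm m = (\<lambda>z. (mu z, (mt m w z - mu z) / a m, pi z, (pt m w z - pi z) / a m))" for m
  have KK: "ennreal K \<le> ennreal K'" unfolding K'_def by (rule ennreal_leI) simp
  have RDm: "RD P (Xm m) (h m w) (hb m) (hbY m) K'" if m: "m \<ge> N" for m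
  proof -
    from N1 m have A: "(\<forall>x u y v. h m w x u y v \<ge> 0)
       \<and> distributed P (lborel :: (real \<times> real \<times> real \<times> real) measure) (Xm m)
           (\<lambda>(x, u, y, v). ennreal (h m w x u y v))
       \<and> (\<forall>x u y v. (\<lambda>x'. h m w x' u y v) differentiable (at x))
       \<and> (\<forall>x u y v. (\<lambda>y'. h m w x u y' v) differentiable (at y))
       \<and> (\<forall>x u y v. (\<lambda>x'. int_upto (h m w) x' u y v) differentiable (at x))
       \<and> (\<forall>x u y v. (\<lambda>x'. deriv (\<lambda>x''. int_upto (h m w) x'' u y v) x') differentiable (at x))"
      unfolding Xm_def N_def by auto
    from N2 m have B: "(\<forall>i\<le>2. \<forall>u v. hb m i u v \<ge> 0 \<and> hbY m i u v \<ge> 0)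
          \<and> (\<forall>i\<le>2. (\<lambda>(u, v). hb m i u v) \<in> borel_measurable lborel
                   \<and> (\<lambda>(u, v). hbY m i u v) \<in> borel_measurable lborel)
          \<and> (\<forall>x u y v.
               h m w x u y v \<le> hb m 0 u v
             \<and> \<bar>deriv (\<lambda>x'. h m w x' u y v) x\<bar> \<le> hb m 1 u v
             \<and> \<bar>deriv (\<lambda>y'. h m w x u y' v) y\<bar> \<le> hb m 2 u v
             \<and> int_upto (h m w) x u y v \<le> hbY m 0 u v
             \<and> \<bar>deriv (\<lambda>x'. int_upto (h m w) x' u y v) x\<bar> \<le> hbY m 1 u v
             \<and> \<bar>deriv (\<lambda>x'. deriv (\<lambda>x''. int_upto (h m w) x'' u y v) x') x\<bar> \<le> hbY m 2 u v)
          \<and> (\<forall>i\<le>2. \<forall>r::nat\<in>{1,2}.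
               (\<integral>\<^sup>+ (u, v). ennreal ((1 + \<bar>u\<bar> + \<bar>v\<bar>) ^ r * hb m i u v)
                   \<partial>(lborel :: (real \<times> real) measure)) \<le> ennreal K
             \<and> (\<integral>\<^sup>+ (u, v). ennreal ((1 + \<bar>u\<bar> + \<bar>v\<bar>) ^ r * hbY m i u v)
                   \<partial>(lborel :: (real \<times> real) measure)) \<le> ennreal K)"
      unfolding N_def by auto
    have mom: "(\<integral>\<^sup>+ (u, v). ennreal ((1 + \<bar>u\<bar> + \<bar>v\<bar>) ^ 1 * hb m i u v) \<partial>(lborel :: (real \<times> real) measure)) \<le> ennreal K'
             \<and> (\<integral>\<^sup>+ (u, v). ennreal ((1 + \<bar>u\<bar> + \<bar>v\<bar>) ^ 1 * hbY m i u v) \<partial>(lborel :: (real \<times> real) measure)) \<le> ennreal K'"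
      if i: "i \<le> 2" for i
    proof -
      have "(\<integral>\<^sup>+ (u, v). ennreal ((1 + \<bar>u\<bar> + \<bar>v\<bar>) ^ 1 * hb m i u v) \<partial>(lborel :: (real \<times> real) measure)) \<le> ennreal K
             \<and> (\<integral>\<^sup>+ (u, v). ennreal ((1 + \<bar>u\<bar> + \<bar>v\<bar>) ^ 1 * hbY m i u v) \<partial>(lborel :: (real \<times> real) measure)) \<le> ennreal K"
        using B i by blast
      thus ?thesis using KK order_trans by blast
    qed
    have K'0: "K' \<ge> 0" unfolding K'_def by simp
    show ?thesis
      using A B mom K'0 by (intro RD.intro[OF P]) simp_all
  qed
  define e where "e m = \<bar>xs m - x\<bar> + \<bar>ys m - y\<bar> + \<bar>a m - 0\<bar>" for m
  have xs: "xs \<longlonglongrightarrow> x" and ys: "ys \<longlonglongrightarrow> y"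
    using tendsto_fst[OF conv] tendsto_snd[OF conv] by simp_all
  have e0: "e \<longlonglongrightarrow> 0"
  proof -
    have "e \<longlonglongrightarrow> \<bar>x - x\<bar> + \<bar>y - y\<bar> + \<bar>0 - 0\<bar>"
      unfolding e_def by (intro tendsto_intros xs ys a_lim)
    thus ?thesis by simp
  qed
  define \<Phi> where "\<Phi> s t = Lim (at_right 0) (\<lambda>d. measure P {z \<in> space P. pi z \<le> t \<and> \<bar>mu z - s\<bar> \<le> d} / (2 * d))" for s t
  define f0 where "f0 = pt_density P mu x"
  define f0' where "f0' = deriv (pt_density P mu) x"
  define dPx where "dPx = deriv (\<lambda>s. \<Phi> s y) x"
  define dPy where "dPy = deriv (\<lambda>t. \<Phi> x t) y"
  have mu_eq: "(\<lambda>z. fst (Xm m z) + 0 * fst (snd (Xm m z))) = mu" for m by (simp add: Xm_def)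
  have pi_eq: "(\<lambda>z. fst (snd (snd (Xm m z))) + 0 * snd (snd (snd (Xm m z)))) = pi" for m by (simp add: Xm_def)
  have mt_eq: "(\<lambda>z. fst (Xm m z) + a m * fst (snd (Xm m z))) = mt m w" for m
    using a_pos[of m] by (simp add: Xm_def fun_eq_iff)
  have pt_eq: "(\<lambda>z. fst (snd (snd (Xm m z))) + a m * snd (snd (snd (Xm m z)))) = pt m w" for m
    using a_pos[of m] by (simp add: Xm_def fun_eq_iff)
  have FN: "RD.F (h m w) 0 s t = \<Phi> s t" if "m \<ge> N" for m s t
    using RD.F_eq_Lim[OF RDm[OF that], of 0 s t] by (simp add: Xm_def \<Phi>_def)
  have fN: "RD.f (h m w) 0 s = pt_density P mu s" if "m \<ge> N" for m s
    using RD.pt_density_eq[OF RDm[OF that], of 0 s] by (simp add: Xm_def)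
  have FxN: "RD.Fx (h m w) 0 x y = dPx" if "m \<ge> N" for m
  proof -
    have "((\<lambda>s. \<Phi> s y) has_real_derivative RD.Fx (h m w) 0 x y) (at x)"
      using RD.F_deriv_x[OF RDm[OF that], of 0 y x] FN[OF that] by simp
    thus ?thesis unfolding dPx_def by (rule DERIV_imp_deriv[symmetric])
  qed
  have FyN: "RD.Fy (h m w) 0 x y = dPy" if "m \<ge> N" for m
  proof -
    have "((\<lambda>t. \<Phi> x t) has_real_derivative RD.Fy (h m w) 0 x y) (at y)"
      using RD.F_deriv_y[OF RDm[OF that], of 0 x y] FN[OF that] by simp
    thus ?thesis unfolding dPy_def by (rule DERIV_imp_deriv[symmetric])
  qed
  have fxN: "RD.fx (h m w) 0 x = f0'" if "m \<ge> N" for m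
  proof -
    have e1: "RD.f (h m w) 0 = pt_density P mu" using fN[OF that] by auto
    have "(pt_density P mu has_real_derivative RD.fx (h m w) 0 x) (at x)"
      using RD.f_deriv[OF RDm[OF that], of 0 x] unfolding e1 .
    thus ?thesis unfolding f0'_def by (rule DERIV_imp_deriv[symmetric])
  qed
  have fN0: "RD.f (h N w) 0 x = f0" using fN[of N x] by (simp add: f0_def)
  have FN0: "RD.F (h N w) 0 x y = \<Phi> x y" using FN[of N x y] by simp
  have f0nz: "f0 \<noteq> 0" using nz by (simp add: f0_def)
  have W1: "(\<lambda>m. RD.F (h m w) (a m) (xs m) (ys m)) \<longlonglongrightarrow> \<Phi> x y"
  proof (rule seq_close[OF _ e0, where N=N and C="2 * K'"])
    fix m assume m: "m \<ge> N"
    show "\<bar>RD.F (h m w) (a m) (xs m) (ys m) - \<Phi> x y\<bar> \<le> e m * (2 * K')"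
      using RD.F_lip[OF RDm[OF m], of "a m" "xs m" "ys m" 0 x y] FN[OF m, of x y] by (simp add: e_def)
  qed
  have W2: "(\<lambda>m. RD.Fx (h m w) (a m) (xs m) (ys m)) \<longlonglongrightarrow> dPx"
  proof (rule seq_close[OF _ e0, where N=N and C="2 * K'"])
    fix m assume m: "m \<ge> N"
    show "\<bar>RD.Fx (h m w) (a m) (xs m) (ys m) - dPx\<bar> \<le> e m * (2 * K')"
      using RD.Fx_lip[OF RDm[OF m], of "a m" "xs m" "ys m" 0 x y] FxN[OF m] by (simp add: e_def)
  qed
  have W5: "(\<lambda>m. RD.Fy (h m w) (a m) (xs m) (ys m)) \<longlonglongrightarrow> dPy"
  proof (rule seq_close[OF _ e0, where N=N and C="2 * K'"])
    fix m assume m: "m \<ge> N"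
    show "\<bar>RD.Fy (h m w) (a m) (xs m) (ys m) - dPy\<bar> \<le> e m * (2 * K')"
      using RD.Fy_lip[OF RDm[OF m], of "a m" "xs m" "ys m" 0 x y] FyN[OF m] by (simp add: e_def)
  qed
  have K'0: "K' \<ge> 0" unfolding K'_def by simp
  have W3: "(\<lambda>m. RD.f (h m w) (a m) (xs m)) \<longlonglongrightarrow> f0"
  proof (rule seq_close[OF _ e0, where N=N and C="2 * K'"])
    fix m assume m: "m \<ge> N"
    have "\<bar>RD.f (h m w) (a m) (xs m) - RD.f (h m w) 0 x\<bar> \<le> (\<bar>xs m - x\<bar> + \<bar>a m - 0\<bar>) * (2 * K')"
      by (rule RD.f_lip[OF RDm[OF m]])
    also have "\<dots> \<le> e m * (2 * K')" unfolding e_def using K'0 by (intro mult_right_mono) auto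
    finally show "\<bar>RD.f (h m w) (a m) (xs m) - f0\<bar> \<le> e m * (2 * K')"
      using fN[OF m, of x] by (simp add: f0_def)
  qed
  have W4: "(\<lambda>m. RD.fx (h m w) (a m) (xs m)) \<longlonglongrightarrow> f0'"
  proof (rule seq_close[OF _ e0, where N=N and C="2 * K'"])
    fix m assume m: "m \<ge> N"
    have "\<bar>RD.fx (h m w) (a m) (xs m) - RD.fx (h m w) 0 x\<bar> \<le> (\<bar>xs m - x\<bar> + \<bar>a m - 0\<bar>) * (2 * K')"
      by (rule RD.fx_lip[OF RDm[OF m]])
    also have "\<dots> \<le> e m * (2 * K')" unfolding e_def using K'0 by (intro mult_right_mono) auto
    finally show "\<bar>RD.fx (h m w) (a m) (xs m) - f0'\<bar> \<le> e m * (2 * K')"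
      using fxN[OF m] by simp
  qed
  have evN: "\<forall>\<^sub>F m in sequentially. m \<ge> N" by (rule eventually_ge_at_top)
  have evnz: "\<forall>\<^sub>F m in sequentially. RD.f (h m w) (a m) (xs m) \<noteq> 0"
    by (rule tendsto_imp_eventually_ne[OF W3 f0nz])
  have T1: "deriv (\<lambda>x'. cond_cdf P mu pi x' y) x = (dPx * f0 - \<Phi> x y * f0') / (f0 * f0)"
    using RD.dx_cond[OF RDm[of N], of 0 x y] fN0 FN0 FxN[of N] fxN[of N] f0nz
    by (simp add: Xm_def)
  have T2: "deriv (\<lambda>y'. cond_cdf P mu pi x y') y = dPy / f0"
    using RD.dy_cond[OF RDm[of N], of 0 x y] fN0 FyN[of N] f0nz
    by (simp add: Xm_def)
  have S1: "\<forall>\<^sub>F m in sequentially. (RD.Fx (h m w) (a m) (xs m) (ys m) * RD.f (h m w) (a m) (xs m)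
              - RD.F (h m w) (a m) (xs m) (ys m) * RD.fx (h m w) (a m) (xs m)) / (RD.f (h m w) (a m) (xs m) * RD.f (h m w) (a m) (xs m))
            = deriv (\<lambda>x'. cond_cdf P (mt m w) (pt m w) x' (ys m)) (xs m)"
    using evN evnz
  proof eventually_elim
    case (elim m)
    show ?case using RD.dx_cond[OF RDm[OF elim(1)], of "a m" "xs m" "ys m"] elim(2)
      by (simp add: mt_eq pt_eq)
  qed
  have S2: "\<forall>\<^sub>F m in sequentially. RD.Fy (h m w) (a m) (xs m) (ys m) / RD.f (h m w) (a m) (xs m)
            = deriv (\<lambda>y'. cond_cdf P (mt m w) (pt m w) (xs m) y') (ys m)"
    using evN evnz
  proof eventually_elim
    case (elim m)
    show ?case using RD.dy_cond[OF RDm[OF elim(1)], of "a m" "xs m" "ys m"] elim(2)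
      by (simp add: mt_eq pt_eq)
  qed
  have L1: "(\<lambda>m. (RD.Fx (h m w) (a m) (xs m) (ys m) * RD.f (h m w) (a m) (xs m)
              - RD.F (h m w) (a m) (xs m) (ys m) * RD.fx (h m w) (a m) (xs m)) / (RD.f (h m w) (a m) (xs m) * RD.f (h m w) (a m) (xs m)))
            \<longlonglongrightarrow> (dPx * f0 - \<Phi> x y * f0') / (f0 * f0)"
    using f0nz by (intro tendsto_intros W1 W2 W3 W4) auto
  have L2: "(\<lambda>m. RD.Fy (h m w) (a m) (xs m) (ys m) / RD.f (h m w) (a m) (xs m)) \<longlonglongrightarrow> dPy / f0"
    using f0nz by (intro tendsto_intros W5 W3)
  show "(\<lambda>m. deriv (\<lambda>x'. cond_cdf P (mt m w) (pt m w) x' (ys m)) (xs m)) \<longlonglongrightarrow> deriv (\<lambda>x'. cond_cdf P mu pi x' y) x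
      \<and> (\<lambda>m. deriv (\<lambda>y'. cond_cdf P (mt m w) (pt m w) (xs m) y') (ys m)) \<longlonglongrightarrow> deriv (\<lambda>y'. cond_cdf P mu pi x y') y"
    unfolding T1 T2 using Lim_transform_eventually[OF L1 S1] Lim_transform_eventually[OF L2 S2] by blast
qed

end
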